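(* For every non-principal ultrafilter $\mathcal U$ on $\mathbb N$, the ultrapower $(\mathcal A/\mathcal J)_{\mathcal U}$ is not simple, and hence not purely infinite.
   Context: Let $\mathrm{Cu}_2$ be the involutive monoid with identity $e$ and zero element $\lozenge$ (so $\lozenge t=\lozenge=t\lozenge$ for all $t$), generated by $s_1,s_2,s_1^*,s_2^*$ subject to $s_1^*s_1=e=s_2^*s_2$ and $s_1^*s_2=\lozenge=s_2^*s_1$, with involution $t\mapsto t^*$ satisfying $(t^* )^*=t$, $(tu)^*=u^*t^*$. Let $\mathcal A=\ell^1(\mathrm{Cu}_2\setminus\{\lozenge\})$ with product $\#$ determined by bilinearity and continuity from $\delta_s\#\delta_t=\delta_{st}$ if $st\neq\lozenge$ and $\delta_s\#\delta_t=0$ if $st=\lozenge$; this is a unital Banach $*$-algebra with unit $\delta_e$. Let $f_0=\delta_e-\delta_{s_1s_1^*}-\delta_{s_2s_2^*}$ and let $\mathcal J$ be the closed two-sided ideal of $\mathcal A$ generated by $f_0$; $\mathcal A/\mathcal J$ carries the quotient norm. For a Banach algebra $\mathcal B$, the ultrapower is $(\mathcal B)_{\mathcal U}=\ell^\infty(\mathcal B)/c_{\mathcal U}(\mathcal B)$, where $\ell^\infty(\mathcal B)$ is the Banach algebra of bounded sequences with pointwise operations and sup norm and $c_{\mathcal U}(\mathcal B)$ is the closed ideal of sequences $(b_n)$ with $\lim_{n\to\mathcal U}\|b_n\|=0$. A unital algebra is purely infinite if it is not a division algebra and for every non-zero $a$ there exist $b,c$ with $bac=1$. *)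

theory Defs
  imports "HOL-Analysis.Analysis" "HOL-Algebra.QuotRing"
begin

text \<open>Generators: s1, s2, s1*, s2*, and the zero element (written Zg).\<close>
datatype gen = S1 | S2 | S1s | S2s | Zg

inductive cu_cong :: "gen list \<Rightarrow> gen list \<Rightarrow> bool" where
  cu_refl: "cu_cong u u"
| cu_sym: "cu_cong u v \<Longrightarrow> cu_cong v u"
| cu_trans: "cu_cong u v \<Longrightarrow> cu_cong v w \<Longrightarrow> cu_cong u w"
| cu_ctxt: "cu_cong u v \<Longrightarrow> cu_cong (x @ u @ y) (x @ v @ y)"
| cu_rel1: "cu_cong [S1s, S1] []"
| cu_rel2: "cu_cong [S2s, S2] []"
| cu_rel3: "cu_cong [S1s, S2] [Zg]"
| cu_rel4: "cu_cong [S2s, S1] [Zg]"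
| cu_zl: "cu_cong [Zg, t] [Zg]"
| cu_zr: "cu_cong [t, Zg] [Zg]"

definition cu_cls :: "gen list \<Rightarrow> gen list set" where
  "cu_cls w = {v. cu_cong w v}"

definition Cu2 :: "gen list set set" where
  "Cu2 = range cu_cls"

definition cu_e :: "gen list set" where "cu_e = cu_cls []"
definition cu_zero :: "gen list set" where "cu_zero = cu_cls [Zg]"

definition cu_rep :: "gen list set \<Rightarrow> gen list" where
  "cu_rep C = (SOME w. C = cu_cls w)"

definition cu_mult :: "gen list set \<Rightarrow> gen list set \<Rightarrow> gen list set" where
  "cu_mult C D = cu_cls (cu_rep C @ cu_rep D)"

definition Cu2nz :: "gen list set set" where
  "Cu2nz = Cu2 - {cu_zero}"

type_synonym l1elt = "gen list set \<Rightarrow> complex"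

definition l1 :: "l1elt set" where
  "l1 = {f. (\<forall>s. s \<notin> Cu2nz \<longrightarrow> f s = 0) \<and> (\<lambda>s. norm (f s)) summable_on Cu2nz}"

definition l1norm :: "l1elt \<Rightarrow> real" where
  "l1norm f = (\<Sum>\<^sub>\<infinity>s\<in>Cu2nz. norm (f s))"

text \<open>The product \<open>#\<close>: the bilinear continuous extension of
  delta_s # delta_t = delta_(st) (or 0 if st is the zero), i.e. convolution.\<close>
definition conv :: "l1elt \<Rightarrow> l1elt \<Rightarrow> l1elt" where
  "conv f g w = (if w \<in> Cu2nz then
      (\<Sum>\<^sub>\<infinity>(s, t)\<in>{(s, t). s \<in> Cu2nz \<and> t \<in> Cu2nz \<and> cu_mult s t = w}. f s * g t)
    else 0)"

definition delta :: "gen list set \<Rightarrow> l1elt" where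
  "delta s = (\<lambda>t. if t = s then 1 else 0)"

definition A_ring :: "l1elt ring" where
  "A_ring = \<lparr>carrier = l1, mult = conv, one = delta cu_e, zero = (\<lambda>_. 0), add = (\<lambda>f g s. f s + g s)\<rparr>"

definition f0 :: l1elt where
  "f0 = (\<lambda>s. delta cu_e s - delta (cu_cls [S1, S1s]) s - delta (cu_cls [S2, S2s]) s)"

definition l1_closed :: "l1elt set \<Rightarrow> bool" where
  "l1_closed I \<longleftrightarrow> (\<forall>X x. (\<forall>n. X n \<in> I) \<and> x \<in> l1 \<and> (\<lambda>n. l1norm (\<lambda>s. X n s - x s)) \<longlonglongrightarrow> 0 \<longrightarrow> x \<in> I)"

definition J :: "l1elt set" where
  "J = \<Inter>{I. ideal I A_ring \<and> l1_closed I \<and> f0 \<in> I}"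

definition AJ :: "l1elt set ring" where
  "AJ = A_ring Quot J"

definition qnorm :: "l1elt set \<Rightarrow> real" where
  "qnorm C = Inf {l1norm x | x. x \<in> C}"

definition linf :: "('a, 'b) ring_scheme \<Rightarrow> ('a \<Rightarrow> real) \<Rightarrow> (nat \<Rightarrow> 'a) ring" where
  "linf B N = \<lparr>carrier = {X. (\<forall>n. X n \<in> carrier B) \<and> (\<exists>M. \<forall>n. N (X n) \<le> M)},
     mult = (\<lambda>X Y n. X n \<otimes>\<^bsub>B\<^esub> Y n), one = (\<lambda>n. \<one>\<^bsub>B\<^esub>),
     zero = (\<lambda>n. \<zero>\<^bsub>B\<^esub>), add = (\<lambda>X Y n. X n \<oplus>\<^bsub>B\<^esub> Y n)\<rparr>"

definition cU :: "('a, 'b) ring_scheme \<Rightarrow> ('a \<Rightarrow> real) \<Rightarrow> nat filter \<Rightarrow> (nat \<Rightarrow> 'a) set" where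
  "cU B N U = {X \<in> carrier (linf B N). ((\<lambda>n. N (X n)) \<longlongrightarrow> 0) U}"

definition ultrapower :: "('a, 'b) ring_scheme \<Rightarrow> ('a \<Rightarrow> real) \<Rightarrow> nat filter \<Rightarrow> (nat \<Rightarrow> 'a) set ring" where
  "ultrapower B N U = linf B N Quot cU B N U"

definition nat_ultrafilter :: "nat filter \<Rightarrow> bool" where
  "nat_ultrafilter U \<longleftrightarrow> U \<noteq> bot \<and> (\<forall>P. eventually P U \<or> eventually (\<lambda>n. \<not> P n) U)"

definition nonprincipal :: "nat filter \<Rightarrow> bool" where
  "nonprincipal U \<longleftrightarrow> (\<forall>m. eventually (\<lambda>n. n \<noteq> m) U)"

definition simple_ring :: "('a, 'b) ring_scheme \<Rightarrow> bool" where
  "simple_ring R \<longleftrightarrow> carrier R \<noteq> {\<zero>\<^bsub>R\<^esub>} \<and>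
     (\<forall>I. ideal I R \<longrightarrow> I = {\<zero>\<^bsub>R\<^esub>} \<or> I = carrier R)"

definition division_ring :: "('a, 'b) ring_scheme \<Rightarrow> bool" where
  "division_ring R \<longleftrightarrow> \<one>\<^bsub>R\<^esub> \<noteq> \<zero>\<^bsub>R\<^esub> \<and>
     (\<forall>a \<in> carrier R. a \<noteq> \<zero>\<^bsub>R\<^esub> \<longrightarrow> a \<in> Units R)"

definition purely_infinite :: "('a, 'b) ring_scheme \<Rightarrow> bool" where
  "purely_infinite R \<longleftrightarrow> \<not> division_ring R \<and>
     (\<forall>a \<in> carrier R. a \<noteq> \<zero>\<^bsub>R\<^esub> \<longrightarrow>
        (\<exists>b \<in> carrier R. \<exists>c \<in> carrier R. b \<otimes>\<^bsub>R\<^esub> a \<otimes>\<^bsub>R\<^esub> c = \<one>\<^bsub>R\<^esub>))"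

end

theory Submission
  imports Defs
begin


fun gmap :: "gen \<Rightarrow> nat \<Rightarrow> nat option" where
  "gmap S1 k = Some (2*k)"
| "gmap S2 k = Some (2*k+1)"
| "gmap S1s k = (if even k then Some (k div 2) else None)"
| "gmap S2s k = (if odd k then Some (k div 2) else None)"
| "gmap Zg k = None"

fun phi :: "gen list \<Rightarrow> nat \<Rightarrow> nat option" where
  "phi [] k = Some k"
| "phi (g # w) k = Option.bind (phi w k) (gmap g)"

lemma phi_append: "phi (x @ y) k = Option.bind (phi y k) (phi x)"
  by (induction x arbitrary: k) (auto split: Option.bind_splits option.splits)

lemma cu_cong_phi: "cu_cong u v \<Longrightarrow> phi u = phi v"
proof (induction rule: cu_cong.induct)
  case (cu_ctxt u v x y)
  then show ?case by (auto simp: phi_append fun_eq_iff)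
next
qed (auto simp: fun_eq_iff split: Option.bind_splits)

lemma gmap_inj: "gmap g k = Some n \<Longrightarrow> gmap g k' = Some n \<Longrightarrow> k = k'"
  by (cases g) (auto split: if_splits elim!: evenE oddE)

lemma phi_inj: "phi w k = Some n \<Longrightarrow> phi w k' = Some n \<Longrightarrow> k = k'"
proof (induction w arbitrary: n)
  case (Cons g w)
  then show ?case
    by (auto split: Option.bind_splits dest: gmap_inj)
qed simp

lemma cu_equiv: "cu_cong u v \<Longrightarrow> cu_cong v w \<Longrightarrow> cu_cong u w" "cu_cong u v \<Longrightarrow> cu_cong v u"
  by (auto intro: cu_cong.intros)

lemma cu_cls_eq: "cu_cls u = cu_cls v \<longleftrightarrow> cu_cong u v"
  unfolding cu_cls_def by (auto intro: cu_cong.intros)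

lemma cu_rep: "cu_cls (cu_rep (cu_cls w)) = cu_cls w"
  unfolding cu_rep_def by (rule someI2[of _ w]) auto

lemma cu_cong_app: "cu_cong a a' \<Longrightarrow> cu_cong b b' \<Longrightarrow> cu_cong (a @ b) (a' @ b')"
proof -
  assume a: "cu_cong a a'" and b: "cu_cong b b'"
  have 1: "cu_cong (a @ b) (a' @ b)" using cu_ctxt[OF a, of "[]" b] by simp
  have 2: "cu_cong (a' @ b) (a' @ b')" using cu_ctxt[OF b, of a' "[]"] by simp
  show ?thesis using 1 2 by (rule cu_trans)
qed

lemma cu_mult_cls: "cu_mult (cu_cls u) (cu_cls v) = cu_cls (u @ v)"
  unfolding cu_mult_def
  by (simp add: cu_cls_eq) (metis cu_cls_eq cu_cong_app cu_rep)

definition cphi :: "gen list set \<Rightarrow> nat \<Rightarrow> nat option" where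
  "cphi C = phi (cu_rep C)"

lemma cphi_cls: "cphi (cu_cls w) = phi w"
  unfolding cphi_def by (metis cu_cls_eq cu_cong_phi cu_rep)

lemma Cu2_cases: "s \<in> Cu2 \<Longrightarrow> (\<And>w. s = cu_cls w \<Longrightarrow> P) \<Longrightarrow> P"
  unfolding Cu2_def by auto

lemma cu_mult_closed: "cu_mult s t \<in> Cu2"
  unfolding cu_mult_def Cu2_def by auto

lemma cu_mult_assoc: "s \<in> Cu2 \<Longrightarrow> t \<in> Cu2 \<Longrightarrow> r \<in> Cu2 \<Longrightarrow>
   cu_mult (cu_mult s t) r = cu_mult s (cu_mult t r)"
  by (auto elim!: Cu2_cases simp: cu_mult_cls)

lemma cphi_mult: "s \<in> Cu2 \<Longrightarrow> t \<in> Cu2 \<Longrightarrow> cphi (cu_mult s t) k = Option.bind (cphi t k) (cphi s)"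
  by (auto elim!: Cu2_cases simp: cu_mult_cls cphi_cls phi_append)

lemma cphi_inj: "cphi s k = Some n \<Longrightarrow> cphi s k' = Some n \<Longrightarrow> k = k'"
  unfolding cphi_def using phi_inj by blast

lemma cphi_zero: "cphi cu_zero k = None"
  unfolding cu_zero_def by (simp add: cphi_cls)

lemma nz_if_phi: "s \<in> Cu2 \<Longrightarrow> cphi s k = Some n \<Longrightarrow> s \<in> Cu2nz"
  unfolding Cu2nz_def using cphi_zero by auto

lemma cls_in_Cu2: "cu_cls w \<in> Cu2"
  unfolding Cu2_def by auto

lemma e_in: "cu_e \<in> Cu2nz"
  unfolding cu_e_def by (rule nz_if_phi[of _ 0 0]) (auto simp: cls_in_Cu2 cphi_cls)

lemma e_left: "s \<in> Cu2 \<Longrightarrow> cu_mult cu_e s = s"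
  by (auto elim!: Cu2_cases simp: cu_e_def cu_mult_cls)

lemma e_right: "s \<in> Cu2 \<Longrightarrow> cu_mult s cu_e = s"
  by (auto elim!: Cu2_cases simp: cu_e_def cu_mult_cls)

lemma zg_left: "cu_cong (Zg # u) [Zg]"
proof (induction u rule: rev_induct)
  case (snoc x xs)
  have "cu_cong ((Zg # xs) @ [x]) ([Zg] @ [x])"
    using cu_cong_app[OF snoc cu_refl] .
  moreover have "cu_cong [Zg, x] [Zg]" by (rule cu_zl)
  ultimately show ?case by (auto intro: cu_trans)
qed (rule cu_refl)

lemma zg_right: "cu_cong (u @ [Zg]) [Zg]"
proof (induction u)
  case (Cons x xs)
  have "cu_cong ([x] @ (xs @ [Zg])) ([x] @ [Zg])"
    using cu_cong_app[OF cu_refl Cons] .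
  moreover have "cu_cong [x, Zg] [Zg]" by (rule cu_zr)
  ultimately show ?case by (auto intro: cu_trans)
qed (simp add: cu_refl)

lemma zero_left: "s \<in> Cu2 \<Longrightarrow> cu_mult cu_zero s = cu_zero"
  apply (elim Cu2_cases) apply (simp only: cu_zero_def cu_mult_cls cu_cls_eq) using zg_left by simp

lemma zero_right: "s \<in> Cu2 \<Longrightarrow> cu_mult s cu_zero = cu_zero"
  apply (elim Cu2_cases) apply (simp only: cu_zero_def cu_mult_cls cu_cls_eq) using zg_right by simp

lemma nz_Cu2: "s \<in> Cu2nz \<Longrightarrow> s \<in> Cu2"
  unfolding Cu2nz_def by auto

lemma mult_nz_imp: "s \<in> Cu2 \<Longrightarrow> t \<in> Cu2 \<Longrightarrow> cu_mult s t \<in> Cu2nz \<Longrightarrow> s \<in> Cu2nz \<and> t \<in> Cu2nz"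
  unfolding Cu2nz_def using zero_left zero_right by auto



lemma partition_sum:
  fixes F :: "'a \<Rightarrow> 'c::banach"
  assumes sum: "F summable_on S" and sub: "\<And>w. w \<in> W \<Longrightarrow> A w \<subseteq> S"
    and disj: "\<And>w w'. w \<in> W \<Longrightarrow> w' \<in> W \<Longrightarrow> w \<noteq> w' \<Longrightarrow> A w \<inter> A w' = {}"
  shows "(\<lambda>w. infsum F (A w)) summable_on W"
    and "(\<Sum>\<^sub>\<infinity>w\<in>W. infsum F (A w)) = infsum F (\<Union>w\<in>W. A w)"
proof -
  let ?S = "Sigma W A"
  have inj: "inj_on snd ?S" using disj by (auto simp: inj_on_def)
  have img: "snd ` ?S = (\<Union>w\<in>W. A w)" by force
  have "F summable_on (\<Union>w\<in>W. A w)"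
    by (rule summable_on_subset_banach[OF sum]) (use sub in blast)
  then have s2: "(F \<circ> snd) summable_on ?S"
    using summable_on_reindex[OF inj, of F] img by simp
  then have s3: "(\<lambda>(w,x). F x) summable_on ?S"
    by (simp add: case_prod_beta' comp_def)
  show "(\<lambda>w. infsum F (A w)) summable_on W"
    using summable_on_Sigma_banach[OF s3] .
  have "(\<Sum>\<^sub>\<infinity>w\<in>W. infsum F (A w)) = infsum (\<lambda>(w,x). F x) ?S"
    using infsum_Sigma'_banach[OF s3] .
  also have "\<dots> = infsum (F \<circ> snd) ?S" by (simp add: case_prod_beta' comp_def)
  also have "\<dots> = infsum F (snd ` ?S)" using infsum_reindex[OF inj, of F] by simp
  finally show "(\<Sum>\<^sub>\<infinity>w\<in>W. infsum F (A w)) = infsum F (\<Union>w\<in>W. A w)" using img by simp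
qed

lemma abs_summable_prod:
  fixes F :: "'a \<Rightarrow> complex" and G :: "'b \<Rightarrow> complex"
  assumes "(\<lambda>x. norm (F x)) summable_on A" "(\<lambda>x. norm (G x)) summable_on B"
  shows "(\<lambda>p. norm ((\<lambda>(a,b). F a * G b) p)) summable_on (A \<times> B)"
    and "infsum (\<lambda>(a,b). norm (F a * G b)) (A \<times> B) = infsum (\<lambda>a. norm (F a)) A * infsum (\<lambda>b. norm (G b)) B"
proof -
  have eq: "(\<lambda>p. norm ((\<lambda>(a,b). F a * G b) p)) = (\<lambda>(a,b). norm (F a) * norm (G b))"
    by (auto simp: norm_mult)
  have inner: "(\<lambda>b. norm (F a) * norm (G b)) summable_on B" for a
    using assms(2) by (rule summable_on_cmult_right)
  have outer: "(\<lambda>a. infsum (\<lambda>b. norm (F a) * norm (G b)) B) = (\<lambda>a. norm (F a) * infsum (\<lambda>b. norm (G b)) B)"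
    by (simp add: infsum_cmult_right')
  have so: "(\<lambda>a. norm (F a) * infsum (\<lambda>b. norm (G b)) B) summable_on A"
    using assms(1) by (rule summable_on_cmult_left)
  have ss: "(\<lambda>(a,b). norm (F a) * norm (G b)) summable_on (A \<times> B)"
    by (rule summable_on_SigmaI[where g="\<lambda>a. norm (F a) * infsum (\<lambda>b. norm (G b)) B"])
       (auto intro!: has_sum_cmult_right simp: so assms(2))
  then show "(\<lambda>p. norm ((\<lambda>(a,b). F a * G b) p)) summable_on (A \<times> B)" using eq by simp
  have "infsum (\<lambda>(a,b). norm (F a) * norm (G b)) (A \<times> B) =
        infsum (\<lambda>a. infsum (\<lambda>b. norm (F a) * norm (G b)) B) A"
    using infsum_Sigma'_banach[of "\<lambda>a b. norm (F a) * norm (G b)" A "\<lambda>_. B"] ss by simp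
  also have "\<dots> = infsum (\<lambda>a. norm (F a)) A * infsum (\<lambda>b. norm (G b)) B"
    by (simp add: outer infsum_cmult_left')
  finally show "infsum (\<lambda>(a,b). norm (F a * G b)) (A \<times> B) = infsum (\<lambda>a. norm (F a)) A * infsum (\<lambda>b. norm (G b)) B"
    by (simp add: case_prod_beta' norm_mult)
qed

abbreviation nz where "nz \<equiv> Cu2nz"

definition Pw :: "gen list set \<Rightarrow> (gen list set \<times> gen list set) set" where
  "Pw w = {(s,t). s \<in> nz \<and> t \<in> nz \<and> cu_mult s t = w}"

lemma Pw_sub: "Pw w \<subseteq> nz \<times> nz" unfolding Pw_def by auto

lemma conv_nz: "w \<in> nz \<Longrightarrow> conv f g w = infsum (\<lambda>(s,t). f s * g t) (Pw w)"
  unfolding conv_def Pw_def by simp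

lemma conv_z: "w \<notin> nz \<Longrightarrow> conv f g w = 0"
  unfolding conv_def by simp

lemma l1_zero: "f \<in> l1 \<Longrightarrow> s \<notin> nz \<Longrightarrow> f s = 0"
  unfolding l1_def by auto

lemma l1_abs: "f \<in> l1 \<Longrightarrow> (\<lambda>x. norm (f x)) summable_on nz"
  unfolding l1_def by auto

lemma l1_summ: "f \<in> l1 \<Longrightarrow> B \<subseteq> nz \<Longrightarrow> f summable_on B"
  using abs_summable_summable l1_abs summable_on_subset_banach by blast

lemma l1_abs_sub: "f \<in> l1 \<Longrightarrow> B \<subseteq> nz \<Longrightarrow> (\<lambda>x. norm (f x)) summable_on B"
  using l1_abs summable_on_subset_banach by blast

lemma l1I: "(\<And>s. s \<notin> nz \<Longrightarrow> f s = 0) \<Longrightarrow> (\<lambda>x. norm (f x)) summable_on nz \<Longrightarrow> f \<in> l1"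
  unfolding l1_def by auto

lemma l1norm_nonneg: "l1norm f \<ge> 0"
  unfolding l1norm_def by (simp add: infsum_nonneg)

lemma prod_abs: "f \<in> l1 \<Longrightarrow> g \<in> l1 \<Longrightarrow> (\<lambda>p. norm ((\<lambda>(s,t). f s * g t) p)) summable_on (nz \<times> nz)"
  using abs_summable_prod(1) l1_abs by blast

lemma prod_abs_val: "f \<in> l1 \<Longrightarrow> g \<in> l1 \<Longrightarrow>
   infsum (\<lambda>(s,t). norm (f s * g t)) (nz \<times> nz) = l1norm f * l1norm g"
  using abs_summable_prod(2) l1_abs unfolding l1norm_def by blast

lemma Pw_disj: "Pw w \<inter> Pw w' = {} \<or> w = w'"
  unfolding Pw_def by auto

lemma conv_l1:
  assumes f: "f \<in> l1" and g: "g \<in> l1"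
  shows "conv f g \<in> l1" and "l1norm (conv f g) \<le> l1norm f * l1norm g"
proof -
  let ?N = "\<lambda>(s,t). norm (f s * g t)"
  have sN: "?N summable_on (nz \<times> nz)" using prod_abs[OF f g] by (simp add: case_prod_beta')
  have ps: "(\<lambda>w. infsum ?N (Pw w)) summable_on nz"
    and pv: "(\<Sum>\<^sub>\<infinity>w\<in>nz. infsum ?N (Pw w)) = infsum ?N (\<Union>w\<in>nz. Pw w)"
  proof -
    have d: "\<And>w w'. w \<in> nz \<Longrightarrow> w' \<in> nz \<Longrightarrow> w \<noteq> w' \<Longrightarrow> Pw w \<inter> Pw w' = {}"
      using Pw_disj by metis
    have s: "\<And>w. w \<in> nz \<Longrightarrow> Pw w \<subseteq> nz \<times> nz" using Pw_sub by metis
    show "(\<lambda>w. infsum ?N (Pw w)) summable_on nz" "(\<Sum>\<^sub>\<infinity>w\<in>nz. infsum ?N (Pw w)) = infsum ?N (\<Union>w\<in>nz. Pw w)"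
      using partition_sum[OF sN, of nz Pw, OF s d] by auto
  qed
  have bnd: "norm (conv f g w) \<le> infsum ?N (Pw w)" if "w \<in> nz" for w
  proof -
    have "(\<lambda>p. norm ((\<lambda>(s,t). f s * g t) p)) summable_on Pw w"
      using prod_abs[OF f g] Pw_sub summable_on_subset_banach by blast
    moreover have e: "(\<lambda>x. norm ((\<lambda>(s,t). f s * g t) x)) = ?N" by (simp add: fun_eq_iff case_prod_beta')
    ultimately show ?thesis using norm_infsum_bound[of "\<lambda>(s,t). f s * g t" "Pw w"] conv_nz[OF that] by simp
  qed
  have cs: "(\<lambda>w. norm (conv f g w)) summable_on nz"
    by (rule summable_on_comparison_test[OF ps]) (auto simp: bnd)
  show "conv f g \<in> l1" by (rule l1I) (auto simp: conv_z cs)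
  have "l1norm (conv f g) \<le> (\<Sum>\<^sub>\<infinity>w\<in>nz. infsum ?N (Pw w))"
    unfolding l1norm_def by (rule infsum_mono[OF cs ps]) (simp add: bnd)
  also have "\<dots> \<le> infsum ?N (nz \<times> nz)"
  proof -
    have sub: "(\<Union>w\<in>nz. Pw w) \<subseteq> nz \<times> nz" using Pw_sub by blast
    show ?thesis unfolding pv
      by (rule infsum_mono_neutral[OF summable_on_subset_banach[OF sN sub] sN]) (use sub in auto)
  qed
  also have "\<dots> = l1norm f * l1norm g" using prod_abs_val[OF f g] by (simp add: case_prod_beta')
  finally show "l1norm (conv f g) \<le> l1norm f * l1norm g" .
qed



definition G3 :: "l1elt \<Rightarrow> l1elt \<Rightarrow> l1elt \<Rightarrow> gen list set \<times> gen list set \<times> gen list set \<Rightarrow> complex" where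
  "G3 f g h = (\<lambda>(s,(t,r)). f s * ((\<lambda>(t,r). g t * h r) (t,r)))"

lemma G3_summ:
  assumes f: "f \<in> l1" and g: "g \<in> l1" and h: "h \<in> l1"
  shows "G3 f g h summable_on (nz \<times> (nz \<times> nz))"
proof -
  have gh: "(\<lambda>p. norm ((\<lambda>(s,t). g s * h t) p)) summable_on (nz \<times> nz)" by (rule prod_abs[OF g h])
  have "(\<lambda>p. norm ((\<lambda>(a,b). f a * (\<lambda>(t,r). g t * h r) b) p)) summable_on (nz \<times> (nz \<times> nz))"
    by (rule abs_summable_prod(1)[OF l1_abs[OF f] gh])
  then have "(\<lambda>p. norm (G3 f g h p)) summable_on (nz \<times> (nz \<times> nz))"
    unfolding G3_def by (simp add: case_prod_beta')
  then show ?thesis by (rule abs_summable_summable)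
qed

lemma nz_cu2: "s \<in> nz \<Longrightarrow> s \<in> Cu2" by (rule nz_Cu2)

lemma conv_assoc_L:
  assumes f: "f \<in> l1" and g: "g \<in> l1" and h: "h \<in> l1" and w: "w \<in> nz"
  shows "conv (conv f g) h w = infsum (G3 f g h) {(s,(t,r)). s \<in> nz \<and> t \<in> nz \<and> r \<in> nz \<and> cu_mult (cu_mult s t) r = w}"
    (is "_ = infsum _ ?T")
proof -
  let ?S = "Sigma (Pw w) (\<lambda>(u,r). Pw u)"
  let ?F = "\<lambda>(u,r) (s,t). f s * g t * h r"
  let ?j = "\<lambda>((u,r),(s,t)). (s,(t,r))"
  let ?i = "\<lambda>(s,(t,r)). ((cu_mult s t, r),(s,t))"
  have Tsub: "?T \<subseteq> nz \<times> (nz \<times> nz)" by auto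
  have sT: "G3 f g h summable_on ?T"
    by (rule summable_on_subset_banach[OF G3_summ[OF f g h] Tsub])
  have c1: "?i (?j a) = a" if "a \<in> ?S" for a using that by (auto simp: Pw_def)
  have c2: "?j a \<in> ?T" if "a \<in> ?S" for a using that by (auto simp: Pw_def)
  have c3: "?j (?i b) = b" if "b \<in> ?T" for b using that by auto
  have c4: "?i b \<in> ?S" if bT: "b \<in> ?T" for b
  proof -
    obtain s t r where b: "b = (s,(t,r))" "s \<in> nz" "t \<in> nz" "r \<in> nz" "cu_mult (cu_mult s t) r = w"
      using bT by auto
    have "cu_mult s t \<in> nz" using mult_nz_imp[OF cu_mult_closed nz_cu2[OF b(4)]] b(5) w by auto
    then show ?thesis using b by (auto simp: Pw_def)
  qed
  have c5: "G3 f g h (?j a) = (\<lambda>(x,y). ?F x y) a" if "a \<in> ?S" for a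
    by (auto simp: G3_def case_prod_beta' mult.assoc)
  have sS: "(\<lambda>(x,y). ?F x y) summable_on ?S"
    using summable_on_reindex_bij_witness[of ?S ?i ?j ?T "G3 f g h" "\<lambda>(x,y). ?F x y"] c1 c2 c3 c4 c5 sT
    by blast
  have "conv (conv f g) h w = infsum (\<lambda>(u,r). conv f g u * h r) (Pw w)"
    by (rule conv_nz[OF w])
  also have "\<dots> = infsum (\<lambda>x. infsum (?F x) ((\<lambda>(u,r). Pw u) x)) (Pw w)"
  proof (rule infsum_cong)
    fix x assume x: "x \<in> Pw w"
    obtain u r where xu: "x = (u,r)" "u \<in> nz" using x by (auto simp: Pw_def)
    have "conv f g u * h r = infsum (\<lambda>(s,t). f s * g t) (Pw u) * h r" using conv_nz[OF xu(2)] by simp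
    also have "\<dots> = infsum (\<lambda>p. (\<lambda>(s,t). f s * g t) p * h r) (Pw u)"
      by (rule infsum_cmult_left'[symmetric])
    also have "\<dots> = infsum (?F (u,r)) (Pw u)"
      by (rule infsum_cong) (auto simp: case_prod_beta')
    finally show "(\<lambda>(u,r). conv f g u * h r) x = infsum (?F x) ((\<lambda>(u,r). Pw u) x)" using xu by simp
  qed
  also have "\<dots> = infsum (\<lambda>(x,y). ?F x y) ?S"
    by (rule infsum_Sigma'_banach[OF sS])
  also have "\<dots> = infsum (G3 f g h) ?T"
    using infsum_reindex_bij_witness[of ?S ?i ?j ?T "G3 f g h" "\<lambda>(x,y). ?F x y"] c1 c2 c3 c4 c5
    by blast
  finally show ?thesis .
qed

lemma conv_assoc_R:
  assumes f: "f \<in> l1" and g: "g \<in> l1" and h: "h \<in> l1" and w: "w \<in> nz"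
  shows "conv f (conv g h) w = infsum (G3 f g h) {(s,(t,r)). s \<in> nz \<and> t \<in> nz \<and> r \<in> nz \<and> cu_mult s (cu_mult t r) = w}"
    (is "_ = infsum _ ?T")
proof -
  let ?S = "Sigma (Pw w) (\<lambda>(s,v). Pw v)"
  let ?F = "\<lambda>(s,v) (t,r). f s * (g t * h r)"
  let ?j = "\<lambda>((s,v),(t,r)). (s,(t,r))"
  let ?i = "\<lambda>(s,(t,r)). ((s, cu_mult t r),(t,r))"
  have Tsub: "?T \<subseteq> nz \<times> (nz \<times> nz)" by auto
  have sT: "G3 f g h summable_on ?T"
    by (rule summable_on_subset_banach[OF G3_summ[OF f g h] Tsub])
  have c1: "?i (?j a) = a" if "a \<in> ?S" for a using that by (auto simp: Pw_def)
  have c2: "?j a \<in> ?T" if "a \<in> ?S" for a using that by (auto simp: Pw_def)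
  have c3: "?j (?i b) = b" if "b \<in> ?T" for b using that by auto
  have c4: "?i b \<in> ?S" if bT: "b \<in> ?T" for b
  proof -
    obtain s t r where b: "b = (s,(t,r))" "s \<in> nz" "t \<in> nz" "r \<in> nz" "cu_mult s (cu_mult t r) = w"
      using bT by auto
    have "cu_mult t r \<in> nz" using mult_nz_imp[OF nz_cu2[OF b(2)] cu_mult_closed] b(5) w by auto
    then show ?thesis using b by (auto simp: Pw_def)
  qed
  have c5: "G3 f g h (?j a) = (\<lambda>(x,y). ?F x y) a" if "a \<in> ?S" for a
    by (auto simp: G3_def case_prod_beta' mult.assoc)
  have sS: "(\<lambda>(x,y). ?F x y) summable_on ?S"
    using summable_on_reindex_bij_witness[of ?S ?i ?j ?T "G3 f g h" "\<lambda>(x,y). ?F x y"] c1 c2 c3 c4 c5 sT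
    by blast
  have "conv f (conv g h) w = infsum (\<lambda>(s,v). f s * conv g h v) (Pw w)"
    by (rule conv_nz[OF w])
  also have "\<dots> = infsum (\<lambda>x. infsum (?F x) ((\<lambda>(s,v). Pw v) x)) (Pw w)"
  proof (rule infsum_cong)
    fix x assume x: "x \<in> Pw w"
    obtain s v where xu: "x = (s,v)" "v \<in> nz" using x by (auto simp: Pw_def)
    have "f s * conv g h v = f s * infsum (\<lambda>(t,r). g t * h r) (Pw v)" using conv_nz[OF xu(2)] by simp
    also have "\<dots> = infsum (\<lambda>p. f s * (\<lambda>(t,r). g t * h r) p) (Pw v)"
      by (rule infsum_cmult_right'[symmetric])
    also have "\<dots> = infsum (?F (s,v)) (Pw v)"
      by (rule infsum_cong) (auto simp: case_prod_beta')
    finally show "(\<lambda>(s,v). f s * conv g h v) x = infsum (?F x) ((\<lambda>(s,v). Pw v) x)" using xu by simp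
  qed
  also have "\<dots> = infsum (\<lambda>(x,y). ?F x y) ?S"
    by (rule infsum_Sigma'_banach[OF sS])
  also have "\<dots> = infsum (G3 f g h) ?T"
    using infsum_reindex_bij_witness[of ?S ?i ?j ?T "G3 f g h" "\<lambda>(x,y). ?F x y"] c1 c2 c3 c4 c5
    by blast
  finally show ?thesis .
qed

lemma conv_assoc:
  assumes f: "f \<in> l1" and g: "g \<in> l1" and h: "h \<in> l1"
  shows "conv (conv f g) h = conv f (conv g h)"
proof
  fix w show "conv (conv f g) h w = conv f (conv g h) w"
  proof (cases "w \<in> nz")
    case True
    have "{(s,(t,r)). s \<in> nz \<and> t \<in> nz \<and> r \<in> nz \<and> cu_mult (cu_mult s t) r = w} =
          {(s,(t,r)). s \<in> nz \<and> t \<in> nz \<and> r \<in> nz \<and> cu_mult s (cu_mult t r) = w}"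
      by (auto simp: cu_mult_assoc nz_cu2)
    then show ?thesis using conv_assoc_L[OF f g h True] conv_assoc_R[OF f g h True] by simp
  qed (simp add: conv_z)
qed

lemma infsum_single:
  assumes "a \<in> A" "\<And>x. x \<in> A \<Longrightarrow> x \<noteq> a \<Longrightarrow> f x = 0"
  shows "infsum f A = f a"
proof -
  have "infsum f A = infsum f {a}" by (rule infsum_cong_neutral) (use assms in auto)
  then show ?thesis by simp
qed

lemma l1_add: "f \<in> l1 \<Longrightarrow> g \<in> l1 \<Longrightarrow> (\<lambda>s. f s + g s) \<in> l1"
proof (rule l1I)
  assume f: "f \<in> l1" and g: "g \<in> l1"
  show "f s + g s = 0" if "s \<notin> nz" for s using that f g by (simp add: l1_zero)
  have "(\<lambda>s. norm (f s) + norm (g s)) summable_on nz"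
    using l1_abs[OF f] l1_abs[OF g] by (rule summable_on_add)
  then show "(\<lambda>s. norm (f s + g s)) summable_on nz"
    by (rule summable_on_comparison_test) (auto simp: norm_triangle_ineq)
qed

lemma l1_neg: "f \<in> l1 \<Longrightarrow> (\<lambda>s. - f s) \<in> l1"
  by (rule l1I) (auto simp: l1_zero l1_abs)

lemma l1_zero_fun: "(\<lambda>_. 0) \<in> l1"
  by (rule l1I) auto

lemma delta_l1: "c \<in> nz \<Longrightarrow> delta c \<in> l1"
  by (rule l1I) (auto simp: delta_def split: if_split_asm intro!: finite_nonzero_values_imp_summable_on finite_subset[of _ "{c}"])

lemma conv_unit_left: assumes f: "f \<in> l1" shows "conv (delta cu_e) f = f"
proof
  fix w show "conv (delta cu_e) f w = f w"
  proof (cases "w \<in> nz")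
    case True
    have "conv (delta cu_e) f w = (\<lambda>(s,t). delta cu_e s * f t) (cu_e, w)"
      unfolding conv_nz[OF True]
      by (rule infsum_single) (auto simp: Pw_def e_in True delta_def e_left nz_cu2 split: if_split_asm)
    then show ?thesis by (simp add: delta_def)
  qed (simp add: conv_z l1_zero f)
qed

lemma conv_unit_right: assumes f: "f \<in> l1" shows "conv f (delta cu_e) = f"
proof
  fix w show "conv f (delta cu_e) w = f w"
  proof (cases "w \<in> nz")
    case True
    have "conv f (delta cu_e) w = (\<lambda>(s,t). f s * delta cu_e t) (w, cu_e)"
      unfolding conv_nz[OF True]
      by (rule infsum_single) (auto simp: Pw_def e_in True delta_def e_right nz_cu2 split: if_split_asm)
    then show ?thesis by (simp add: delta_def)
  qed (simp add: conv_z l1_zero f)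
qed

lemma conv_distL:
  assumes f: "f \<in> l1" and g: "g \<in> l1" and h: "h \<in> l1"
  shows "conv (\<lambda>s. f s + g s) h = (\<lambda>s. conv f h s + conv g h s)"
proof
  fix w show "conv (\<lambda>s. f s + g s) h w = conv f h w + conv g h w"
  proof (cases "w \<in> nz")
    case True
    have s1: "(\<lambda>(s,t). f s * h t) summable_on Pw w"
      using abs_summable_summable[OF prod_abs[OF f h]] Pw_sub summable_on_subset_banach by blast
    have s2: "(\<lambda>(s,t). g s * h t) summable_on Pw w"
      using abs_summable_summable[OF prod_abs[OF g h]] Pw_sub summable_on_subset_banach by blast
    have "conv (\<lambda>s. f s + g s) h w = infsum (\<lambda>p. (\<lambda>(s,t). f s * h t) p + (\<lambda>(s,t). g s * h t) p) (Pw w)"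
      unfolding conv_nz[OF True] by (rule infsum_cong) (auto simp: distrib_right)
    also have "\<dots> = conv f h w + conv g h w"
      unfolding conv_nz[OF True] by (rule infsum_add[OF s1 s2])
    finally show ?thesis .
  qed (simp add: conv_z)
qed

lemma conv_distR:
  assumes f: "f \<in> l1" and g: "g \<in> l1" and h: "h \<in> l1"
  shows "conv h (\<lambda>s. f s + g s) = (\<lambda>s. conv h f s + conv h g s)"
proof
  fix w show "conv h (\<lambda>s. f s + g s) w = conv h f w + conv h g w"
  proof (cases "w \<in> nz")
    case True
    have s1: "(\<lambda>(s,t). h s * f t) summable_on Pw w"
      using abs_summable_summable[OF prod_abs[OF h f]] Pw_sub summable_on_subset_banach by blast
    have s2: "(\<lambda>(s,t). h s * g t) summable_on Pw w"
      using abs_summable_summable[OF prod_abs[OF h g]] Pw_sub summable_on_subset_banach by blast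
    have "conv h (\<lambda>s. f s + g s) w = infsum (\<lambda>p. (\<lambda>(s,t). h s * f t) p + (\<lambda>(s,t). h s * g t) p) (Pw w)"
      unfolding conv_nz[OF True] by (rule infsum_cong) (auto simp: distrib_left)
    also have "\<dots> = conv h f w + conv h g w"
      unfolding conv_nz[OF True] by (rule infsum_add[OF s1 s2])
    finally show ?thesis .
  qed (simp add: conv_z)
qed

lemma A_ring_simps: "carrier A_ring = l1" "mult A_ring = conv" "one A_ring = delta cu_e"
  "zero A_ring = (\<lambda>_. 0)" "add A_ring = (\<lambda>f g s. f s + g s)"
  unfolding A_ring_def by simp_all

lemma A_ring_ring: "ring A_ring"
proof (rule ringI)
  show "abelian_group A_ring"
    by (rule abelian_groupI)
       (auto simp: A_ring_simps l1_add l1_zero_fun add.assoc add.commute intro!: bexI[of _ "\<lambda>s. - _ s"] l1_neg)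
  show "monoid A_ring"
    by (rule monoidI)
       (auto simp: A_ring_simps conv_l1 delta_l1 e_in conv_assoc conv_unit_left conv_unit_right)
qed (auto simp: A_ring_simps conv_distL conv_distR)



definition Fb :: "nat \<Rightarrow> nat \<Rightarrow> gen list set set" where
  "Fb k n = {s \<in> nz. cphi s k = Some n}"

definition Mx :: "l1elt \<Rightarrow> nat \<Rightarrow> nat \<Rightarrow> complex" where
  "Mx y n k = infsum y (Fb k n)"

lemma Fb_sub: "Fb k n \<subseteq> nz" unfolding Fb_def by auto

lemma Mx_add: assumes f: "f \<in> l1" and g: "g \<in> l1" shows "Mx (\<lambda>s. f s + g s) n k = Mx f n k + Mx g n k"
  unfolding Mx_def using l1_summ[OF f Fb_sub] l1_summ[OF g Fb_sub] by (rule infsum_add)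

lemma Mx_neg: "Mx (\<lambda>s. - f s) n k = - Mx f n k"
  unfolding Mx_def by (rule infsum_uminus)

lemma Mx_diff: "f \<in> l1 \<Longrightarrow> g \<in> l1 \<Longrightarrow> Mx (\<lambda>s. f s - g s) n k = Mx f n k - Mx g n k"
  using Mx_add[of f "\<lambda>s. - g s" n k] l1_neg[of g] Mx_neg[of g n k] by simp

lemma l1_diff: "f \<in> l1 \<Longrightarrow> g \<in> l1 \<Longrightarrow> (\<lambda>s. f s - g s) \<in> l1"
  using l1_add[of f "\<lambda>s. - g s"] l1_neg[of g] by simp

lemma fsum_bound:
  assumes y: "y \<in> l1" and fin: "finite W" and sub: "\<And>w. w \<in> W \<Longrightarrow> A w \<subseteq> nz"
    and disj: "\<And>w w'. w \<in> W \<Longrightarrow> w' \<in> W \<Longrightarrow> w \<noteq> w' \<Longrightarrow> A w \<inter> A w' = {}"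
  shows "(\<Sum>w\<in>W. norm (infsum y (A w))) \<le> l1norm y"
proof -
  have ya: "(\<lambda>s. norm (y s)) summable_on nz" by (rule l1_abs[OF y])
  have "(\<Sum>w\<in>W. norm (infsum y (A w))) \<le> (\<Sum>w\<in>W. infsum (\<lambda>s. norm (y s)) (A w))"
  proof (rule sum_mono)
    fix w assume "w \<in> W"
    then have "(\<lambda>s. norm (y s)) summable_on A w" using sub summable_on_subset_banach[OF ya] by blast
    then show "norm (infsum y (A w)) \<le> infsum (\<lambda>s. norm (y s)) (A w)" by (rule norm_infsum_bound)
  qed
  also have "\<dots> = (\<Sum>\<^sub>\<infinity>w\<in>W. infsum (\<lambda>s. norm (y s)) (A w))" using fin by simp
  also have "\<dots> = infsum (\<lambda>s. norm (y s)) (\<Union>w\<in>W. A w)"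
    by (rule partition_sum(2)[OF ya sub disj])
  also have "\<dots> \<le> l1norm y" unfolding l1norm_def
    by (rule infsum_mono_neutral) (use sub in \<open>auto intro: summable_on_subset_banach[OF ya] ya\<close>)
  finally show ?thesis .
qed

lemma Mx_bound: "y \<in> l1 \<Longrightarrow> norm (Mx y n k) \<le> l1norm y"
  using fsum_bound[of y "{0::nat}" "\<lambda>_. Fb k n"] Fb_sub unfolding Mx_def by auto

lemma col_bound: "y \<in> l1 \<Longrightarrow> finite F \<Longrightarrow> (\<Sum>n\<in>F. norm (Mx y n k)) \<le> l1norm y"
  unfolding Mx_def by (rule fsum_bound) (auto simp: Fb_def)

lemma row_bound: "y \<in> l1 \<Longrightarrow> finite F \<Longrightarrow> (\<Sum>k\<in>F. norm (Mx y n k)) \<le> l1norm y"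
  unfolding Mx_def by (rule fsum_bound) (auto simp: Fb_def dest: cphi_inj)

lemma infsum_prod:
  fixes a b :: "_ \<Rightarrow> complex"
  assumes "(\<lambda>x. norm (a x)) summable_on A" "(\<lambda>x. norm (b x)) summable_on B"
  shows "infsum a A * infsum b B = infsum (\<lambda>(x,y). a x * b y) (A \<times> B)"
proof -
  have s: "(\<lambda>(x,y). a x * b y) summable_on (A \<times> B)"
    using abs_summable_summable[OF abs_summable_prod(1)[OF assms]] .
  have "infsum (\<lambda>(x,y). a x * b y) (A \<times> B) = infsum (\<lambda>x. infsum (\<lambda>y. a x * b y) B) A"
    using infsum_Sigma'_banach[of "\<lambda>x y. a x * b y" A "\<lambda>_. B"] s by simp
  also have "\<dots> = infsum (\<lambda>x. a x * infsum b B) A" by (simp add: infsum_cmult_right')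
  also have "\<dots> = infsum a A * infsum b B" by (simp add: infsum_cmult_left')
  finally show ?thesis by simp
qed

lemma Mx_conv:
  assumes f: "f \<in> l1" and g: "g \<in> l1"
  shows "(\<lambda>j. Mx f n j * Mx g j k) summable_on UNIV"
    and "Mx (conv f g) n k = (\<Sum>\<^sub>\<infinity>j. Mx f n j * Mx g j k)"
proof -
  let ?F = "\<lambda>(s,t). f s * g t"
  have sF: "?F summable_on (nz \<times> nz)" using abs_summable_summable[OF prod_abs[OF f g]] .
  have d1: "\<And>w w'. w \<in> Fb k n \<Longrightarrow> w' \<in> Fb k n \<Longrightarrow> w \<noteq> w' \<Longrightarrow> Pw w \<inter> Pw w' = {}"
    using Pw_disj by metis
  have s1: "\<And>w. w \<in> Fb k n \<Longrightarrow> Pw w \<subseteq> nz \<times> nz" using Pw_sub by metis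
  have d2: "\<And>j j'. j \<in> UNIV \<Longrightarrow> j' \<in> UNIV \<Longrightarrow> j \<noteq> j' \<Longrightarrow> (Fb j n \<times> Fb k j) \<inter> (Fb j' n \<times> Fb k j') = {}"
    by (auto simp: Fb_def)
  have s2: "\<And>j. j \<in> UNIV \<Longrightarrow> Fb j n \<times> Fb k j \<subseteq> nz \<times> nz" using Fb_sub by blast
  have eq: "(\<Union>w\<in>Fb k n. Pw w) = (\<Union>j\<in>UNIV. Fb j n \<times> Fb k j)"
  proof (intro equalityI subsetI)
    fix p assume "p \<in> (\<Union>w\<in>Fb k n. Pw w)"
    then obtain s t where p: "p = (s,t)" "s \<in> nz" "t \<in> nz" "cphi (cu_mult s t) k = Some n"
      by (auto simp: Pw_def Fb_def)
    then have "Option.bind (cphi t k) (cphi s) = Some n" using cphi_mult nz_cu2 by metis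
    then obtain j where "cphi t k = Some j" "cphi s j = Some n" by (auto split: Option.bind_splits)
    then show "p \<in> (\<Union>j\<in>UNIV. Fb j n \<times> Fb k j)" using p by (auto simp: Fb_def)
  next
    fix p assume "p \<in> (\<Union>j\<in>UNIV. Fb j n \<times> Fb k j)"
    then obtain s t j where p: "p = (s,t)" "s \<in> nz" "t \<in> nz" "cphi t k = Some j" "cphi s j = Some n"
      by (auto simp: Fb_def)
    then have c: "cphi (cu_mult s t) k = Some n" using cphi_mult nz_cu2 by simp
    then have "cu_mult s t \<in> nz" using nz_if_phi cu_mult_closed by blast
    then show "p \<in> (\<Union>w\<in>Fb k n. Pw w)" using p c by (auto simp: Pw_def Fb_def)
  qed
  have prod: "Mx f n j * Mx g j k = infsum ?F (Fb j n \<times> Fb k j)" for j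
    unfolding Mx_def by (rule infsum_prod[OF l1_abs_sub[OF f Fb_sub] l1_abs_sub[OF g Fb_sub]])
  show "(\<lambda>j. Mx f n j * Mx g j k) summable_on UNIV"
    unfolding prod by (rule partition_sum(1)[OF sF s2 d2])
  have "Mx (conv f g) n k = infsum (\<lambda>w. infsum ?F (Pw w)) (Fb k n)"
    unfolding Mx_def by (rule infsum_cong) (auto simp: Fb_def conv_nz)
  also have "\<dots> = infsum ?F (\<Union>w\<in>Fb k n. Pw w)" by (rule partition_sum(2)[OF sF s1 d1])
  also have "\<dots> = infsum ?F (\<Union>j\<in>UNIV. Fb j n \<times> Fb k j)" by (simp add: eq)
  also have "\<dots> = (\<Sum>\<^sub>\<infinity>j. infsum ?F (Fb j n \<times> Fb k j))" by (rule partition_sum(2)[OF sF s2 d2, symmetric])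
  finally show "Mx (conv f g) n k = (\<Sum>\<^sub>\<infinity>j. Mx f n j * Mx g j k)" unfolding prod .
qed

lemma Mx_delta: "c \<in> nz \<Longrightarrow> Mx (delta c) n k = (if cphi c k = Some n then 1 else 0)"
proof (cases "cphi c k = Some n")
  case True
  assume c: "c \<in> nz"
  have "Mx (delta c) n k = delta c c" unfolding Mx_def
    by (rule infsum_single) (auto simp: Fb_def c True delta_def)
  then show ?thesis using True by (simp add: delta_def)
next
  case False
  have "Mx (delta c) n k = 0" unfolding Mx_def
    by (rule infsum_0) (use False in \<open>auto simp: Fb_def delta_def\<close>)
  then show ?thesis using False by simp
qed



lemma ideal_simple:
  fixes R (structure)
  assumes R: "ring R" and sub: "I \<subseteq> carrier R" and z: "\<zero> \<in> I"
    and add: "\<And>a b. a \<in> I \<Longrightarrow> b \<in> I \<Longrightarrow> a \<oplus> b \<in> I"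
    and ml: "\<And>a x. a \<in> I \<Longrightarrow> x \<in> carrier R \<Longrightarrow> x \<otimes> a \<in> I"
    and mr: "\<And>a x. a \<in> I \<Longrightarrow> x \<in> carrier R \<Longrightarrow> a \<otimes> x \<in> I"
  shows "ideal I R"
proof -
  interpret ring R by (rule R)
  have inv: "\<ominus> a \<in> I" if "a \<in> I" for a
  proof -
    have a: "a \<in> carrier R" using that sub by auto
    have "\<ominus> \<one> \<otimes> a = \<ominus> a" using a by (simp add: l_minus)
    then show ?thesis using ml[OF that, of "\<ominus> \<one>"] by simp
  qed
  have "subgroup I (add_monoid R)"
    by (rule subgroup.intro) (use sub z add inv in \<open>auto simp: a_inv_def[symmetric]\<close>)
  then show ?thesis by (rule idealI[OF R]) (auto intro: ml mr)
qed

definition Nset :: "l1elt set" where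
  "Nset = {y \<in> l1. \<forall>n k. Mx y n k = 0}"

lemma Nset_ideal: "ideal Nset A_ring"
proof (rule ideal_simple[OF A_ring_ring])
  show "Nset \<subseteq> carrier A_ring" by (auto simp: Nset_def A_ring_simps)
  show "\<zero>\<^bsub>A_ring\<^esub> \<in> Nset" by (auto simp: Nset_def A_ring_simps l1_zero_fun Mx_def)
  show "a \<oplus>\<^bsub>A_ring\<^esub> b \<in> Nset" if "a \<in> Nset" "b \<in> Nset" for a b
    using that by (auto simp: Nset_def A_ring_simps l1_add Mx_add)
  show "x \<otimes>\<^bsub>A_ring\<^esub> a \<in> Nset" if "a \<in> Nset" "x \<in> carrier A_ring" for a x
    using that by (auto simp: Nset_def A_ring_simps conv_l1 Mx_conv)
  show "a \<otimes>\<^bsub>A_ring\<^esub> x \<in> Nset" if "a \<in> Nset" "x \<in> carrier A_ring" for a x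
    using that by (auto simp: Nset_def A_ring_simps conv_l1 Mx_conv)
qed

lemma Nset_closed: "l1_closed Nset"
  unfolding l1_closed_def
proof (intro allI impI, elim conjE)
  fix X x assume X: "\<forall>n. X n \<in> Nset" and x: "x \<in> l1"
    and lim: "(\<lambda>n. l1norm (\<lambda>s. X n s - x s)) \<longlonglongrightarrow> 0"
  have "Mx x n k = 0" for n k
  proof -
    have "norm (Mx x n k) \<le> l1norm (\<lambda>s. X i s - x s)" for i
    proof -
      have Xi: "X i \<in> l1" "\<forall>n k. Mx (X i) n k = 0" using X by (auto simp: Nset_def)
      have "norm (Mx x n k) = norm (Mx (\<lambda>s. X i s - x s) n k)"
        using Mx_diff[OF Xi(1) x] Xi(2) by simp
      also have "\<dots> \<le> l1norm (\<lambda>s. X i s - x s)" by (rule Mx_bound[OF l1_diff[OF Xi(1) x]])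
      finally show ?thesis .
    qed
    then have "norm (Mx x n k) \<le> 0" using LIMSEQ_le_const[OF lim] by blast
    then show ?thesis by simp
  qed
  then show "x \<in> Nset" using x by (simp add: Nset_def)
qed

lemma phi_a: "phi [S1, S1s] k = (if even k then Some k else None)"
  by auto
lemma phi_b: "phi [S2, S2s] k = (if odd k then Some k else None)"
  by (auto elim: oddE)

lemma a_nz: "cu_cls [S1, S1s] \<in> nz"
  by (rule nz_if_phi[of _ 0 0]) (auto simp: cls_in_Cu2 cphi_cls)
lemma b_nz: "cu_cls [S2, S2s] \<in> nz"
  by (rule nz_if_phi[of _ 1 1]) (auto simp: cls_in_Cu2 cphi_cls)

lemma cphi_e: "cphi cu_e k = Some k"
  by (simp add: cu_e_def cphi_cls)

lemma f0_l1: "f0 \<in> l1"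
  unfolding f0_def by (intro l1_diff delta_l1 e_in a_nz b_nz)

lemma f0_N: "f0 \<in> Nset"
proof -
  have "Mx f0 n k = 0" for n k
  proof -
    have "Mx f0 n k = Mx (delta cu_e) n k - Mx (delta (cu_cls [S1, S1s])) n k - Mx (delta (cu_cls [S2, S2s])) n k"
      unfolding f0_def
      by (simp add: Mx_diff l1_diff delta_l1 e_in a_nz b_nz)
    also have "\<dots> = 0"
      by (simp add: Mx_delta e_in a_nz b_nz cphi_e cphi_cls del: phi.simps) (simp add: phi_a phi_b)
    finally show ?thesis .
  qed
  then show ?thesis using f0_l1 by (simp add: Nset_def)
qed

definition Fam where "Fam = {I. ideal I A_ring \<and> l1_closed I \<and> f0 \<in> I}"

lemma J_ideal: "ideal J A_ring"
proof -
  interpret ring A_ring by (rule A_ring_ring)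
  have "carrier A_ring \<in> Fam"
    using oneideal f0_l1 by (auto simp: Fam_def l1_closed_def A_ring_simps)
  then show ?thesis unfolding J_def by (intro i_Intersect) (auto simp: Fam_def)
qed

lemma J_N: "J \<subseteq> Nset"
  unfolding J_def using Nset_ideal Nset_closed f0_N by blast

lemma J_Mx: "y \<in> J \<Longrightarrow> Mx y n k = 0"
  using J_N by (auto simp: Nset_def)

lemma J_l1: "J \<subseteq> l1"
  using J_N by (auto simp: Nset_def)



abbreviation hJ :: "l1elt \<Rightarrow> l1elt set" where "hJ x \<equiv> J +>\<^bsub>A_ring\<^esub> x"

lemma AJ_ring: "ring AJ"
  unfolding AJ_def by (rule ideal.quotient_is_ring[OF J_ideal])

lemma hJ_hom: "hJ \<in> ring_hom A_ring AJ"
  unfolding AJ_def by (rule ideal.rcos_ring_hom[OF J_ideal])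

lemma AJ_carrier: "carrier AJ = hJ ` l1"
  unfolding AJ_def FactRing_def A_RCOSETS_def' by (auto simp: A_ring_simps)

lemma AJ_mult: "x \<in> l1 \<Longrightarrow> y \<in> l1 \<Longrightarrow> hJ x \<otimes>\<^bsub>AJ\<^esub> hJ y = hJ (conv x y)"
  using ring_hom_mult[OF hJ_hom, of x y] by (simp add: A_ring_simps)

lemma AJ_add: "x \<in> l1 \<Longrightarrow> y \<in> l1 \<Longrightarrow> hJ x \<oplus>\<^bsub>AJ\<^esub> hJ y = hJ (\<lambda>s. x s + y s)"
  using ring_hom_add[OF hJ_hom, of x y] by (simp add: A_ring_simps)

lemma AJ_one: "\<one>\<^bsub>AJ\<^esub> = hJ (delta cu_e)"
  using ring_hom_one[OF hJ_hom] by (simp add: A_ring_simps)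

lemma AJ_zero: "\<zero>\<^bsub>AJ\<^esub> = hJ (\<lambda>_. 0)"
  using ring_hom_zero[OF hJ_hom A_ring_ring AJ_ring] by (simp add: A_ring_simps)

lemma hJ_mem: assumes x: "x \<in> l1" and y: "y \<in> hJ x" shows "y \<in> l1" "Mx y n k = Mx x n k"
proof -
  obtain j where j: "j \<in> J" "y = (\<lambda>s. j s + x s)"
    using y unfolding a_r_coset_def' by (auto simp: A_ring_simps)
  have jl: "j \<in> l1" using j J_l1 by auto
  show "y \<in> l1" using j jl x l1_add by simp
  show "Mx y n k = Mx x n k" using j jl x Mx_add J_Mx by simp
qed

lemma hJ_self: "x \<in> l1 \<Longrightarrow> x \<in> hJ x"
proof -
  assume x: "x \<in> l1"
  interpret ideal J A_ring by (rule J_ideal)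
  show ?thesis using a_rcos_self[of x] x by (simp add: A_ring_simps)
qed

lemma hJ_eq: "x \<in> l1 \<Longrightarrow> y \<in> hJ x \<Longrightarrow> hJ y = hJ x"
proof -
  assume x: "x \<in> l1" and y: "y \<in> hJ x"
  interpret ideal J A_ring by (rule J_ideal)
  show ?thesis using a_repr_independence'[of y x] x y by (simp add: A_ring_simps)
qed

section \<open>quotient norm\<close>

lemma inf_add_bound:
  fixes S T :: "real set"
  assumes "S \<noteq> {}" "T \<noteq> {}" "\<And>a b. a \<in> S \<Longrightarrow> b \<in> T \<Longrightarrow> c \<le> a + b"
  shows "c \<le> Inf S + Inf T"
proof -
  have "c - b \<le> Inf S" if "b \<in> T" for b
    by (rule cInf_greatest[OF assms(1)]) (use assms(3) that in force)
  then have "c - Inf S \<le> Inf T"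
    by (intro cInf_greatest[OF assms(2)]) force
  then show ?thesis by simp
qed

lemma inf_mult_bound:
  fixes S T :: "real set"
  assumes S: "S \<noteq> {}" and T: "T \<noteq> {}" and Sp: "\<And>a. a \<in> S \<Longrightarrow> 0 \<le> a" and Tp: "\<And>b. b \<in> T \<Longrightarrow> 0 \<le> b"
    and cb: "\<And>a b. a \<in> S \<Longrightarrow> b \<in> T \<Longrightarrow> c \<le> a * b"
  shows "c \<le> Inf S * Inf T"
proof (cases "c \<le> 0")
  case True
  have "0 \<le> Inf S" by (rule cInf_greatest[OF S]) (use Sp in auto)
  moreover have "0 \<le> Inf T" by (rule cInf_greatest[OF T]) (use Tp in auto)
  ultimately have "0 \<le> Inf S * Inf T" by simp
  then show ?thesis using True by linarith
next
  case False
  then have c: "c > 0" by simp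
  have pos: "a > 0 \<and> b > 0" if "a \<in> S" "b \<in> T" for a b
  proof -
    have "c \<le> a * b" "0 \<le> a" "0 \<le> b" using cb Sp Tp that by auto
    then have "a \<noteq> 0" "b \<noteq> 0" using c by auto
    then show ?thesis using \<open>0 \<le> a\<close> \<open>0 \<le> b\<close> by simp
  qed
  have key: "c / b \<le> Inf S" if b: "b \<in> T" for b
  proof (rule cInf_greatest[OF S])
    fix a assume a: "a \<in> S"
    have "c \<le> a * b" "b > 0" using cb[OF a b] pos[OF a b] by auto
    then show "c / b \<le> a" by (simp add: divide_le_eq)
  qed
  obtain b0 where b0: "b0 \<in> T" using T by auto
  obtain a0 where a0: "a0 \<in> S" using S by auto
  have "c / b0 > 0" using c pos[OF a0 b0] by simp
  then have IS: "Inf S > 0" using key[OF b0] by linarith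
  have "c / Inf S \<le> Inf T"
  proof (rule cInf_greatest[OF T])
    fix b assume b: "b \<in> T"
    have "c / b \<le> Inf S" "b > 0" using key[OF b] pos[OF a0 b] by auto
    then have "c \<le> Inf S * b" by (simp add: divide_le_eq mult.commute)
    then show "c / Inf S \<le> b" using IS by (simp add: divide_le_eq mult.commute)
  qed
  then show ?thesis using IS by (simp add: divide_le_eq mult.commute)
qed

lemma qnorm_le: "x \<in> l1 \<Longrightarrow> qnorm (hJ x) \<le> l1norm x"
  unfolding qnorm_def
  by (rule cInf_lower) (auto intro: hJ_self bdd_belowI[of _ 0] simp: l1norm_nonneg)

lemma qnorm_nonneg: "x \<in> l1 \<Longrightarrow> qnorm (hJ x) \<ge> 0"
  unfolding qnorm_def
  by (rule cInf_greatest) (auto intro: hJ_self simp: l1norm_nonneg)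

lemma qnorm_ge:
  assumes x: "x \<in> l1" and b: "\<And>y. y \<in> hJ x \<Longrightarrow> c \<le> l1norm y"
  shows "c \<le> qnorm (hJ x)"
  unfolding qnorm_def by (rule cInf_greatest) (use hJ_self[OF x] b in auto)

lemma qnorm_add:
  assumes x: "x \<in> l1" and y: "y \<in> l1"
  shows "qnorm (hJ (\<lambda>s. x s + y s)) \<le> qnorm (hJ x) + qnorm (hJ y)"
  unfolding qnorm_def[of "hJ x"] qnorm_def[of "hJ y"]
proof (rule inf_add_bound)
  show "{l1norm z |z. z \<in> hJ x} \<noteq> {}" "{l1norm z |z. z \<in> hJ y} \<noteq> {}"
    using hJ_self x y by auto
  fix a b assume a: "a \<in> {l1norm z |z. z \<in> hJ x}" and b: "b \<in> {l1norm z |z. z \<in> hJ y}"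
  then obtain x' y' where xy: "x' \<in> hJ x" "y' \<in> hJ y" "a = l1norm x'" "b = l1norm y'" by auto
  have l: "x' \<in> l1" "y' \<in> l1" using hJ_mem xy x y by auto
  have "hJ (\<lambda>s. x' s + y' s) = hJ (\<lambda>s. x s + y s)"
    using AJ_add[OF l] AJ_add[OF x y] hJ_eq[OF x xy(1)] hJ_eq[OF y xy(2)] by simp
  then have "(\<lambda>s. x' s + y' s) \<in> hJ (\<lambda>s. x s + y s)" using hJ_self[OF l1_add[OF l]] by simp
  then have "qnorm (hJ (\<lambda>s. x s + y s)) \<le> l1norm (\<lambda>s. x' s + y' s)"
    unfolding qnorm_def by (intro cInf_lower) (auto intro: bdd_belowI[of _ 0] simp: l1norm_nonneg)
  also have "\<dots> \<le> l1norm x' + l1norm y'"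
    unfolding l1norm_def
  proof -
    have "(\<Sum>\<^sub>\<infinity>s\<in>nz. norm (x' s + y' s)) \<le> (\<Sum>\<^sub>\<infinity>s\<in>nz. norm (x' s) + norm (y' s))"
      by (rule infsum_mono[OF l1_abs[OF l1_add[OF l]] summable_on_add[OF l1_abs[OF l(1)] l1_abs[OF l(2)]]]) (simp add: norm_triangle_ineq)
    also have "\<dots> = (\<Sum>\<^sub>\<infinity>s\<in>nz. norm (x' s)) + (\<Sum>\<^sub>\<infinity>s\<in>nz. norm (y' s))"
      by (rule infsum_add) (auto intro: l1_abs l)
    finally show "(\<Sum>\<^sub>\<infinity>s\<in>nz. norm (x' s + y' s)) \<le> (\<Sum>\<^sub>\<infinity>s\<in>nz. norm (x' s)) + (\<Sum>\<^sub>\<infinity>s\<in>nz. norm (y' s))" .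
  qed
  finally show "qnorm (hJ (\<lambda>s. x s + y s)) \<le> a + b" using xy by simp
qed

lemma qnorm_mult:
  assumes x: "x \<in> l1" and y: "y \<in> l1"
  shows "qnorm (hJ (conv x y)) \<le> qnorm (hJ x) * qnorm (hJ y)"
  unfolding qnorm_def[of "hJ x"] qnorm_def[of "hJ y"]
proof (rule inf_mult_bound)
  show "{l1norm z |z. z \<in> hJ x} \<noteq> {}" "{l1norm z |z. z \<in> hJ y} \<noteq> {}"
    using hJ_self x y by auto
  show "\<And>a. a \<in> {l1norm z |z. z \<in> hJ x} \<Longrightarrow> 0 \<le> a" "\<And>a. a \<in> {l1norm z |z. z \<in> hJ y} \<Longrightarrow> 0 \<le> a"
    by (auto simp: l1norm_nonneg)
  fix a b assume a: "a \<in> {l1norm z |z. z \<in> hJ x}" and b: "b \<in> {l1norm z |z. z \<in> hJ y}"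
  then obtain x' y' where xy: "x' \<in> hJ x" "y' \<in> hJ y" "a = l1norm x'" "b = l1norm y'" by auto
  have l: "x' \<in> l1" "y' \<in> l1" using hJ_mem xy x y by auto
  have "hJ (conv x' y') = hJ (conv x y)"
    using AJ_mult[OF l] AJ_mult[OF x y] hJ_eq[OF x xy(1)] hJ_eq[OF y xy(2)] by simp
  then have "conv x' y' \<in> hJ (conv x y)" using hJ_self[OF conv_l1(1)[OF l]] by simp
  then have "qnorm (hJ (conv x y)) \<le> l1norm (conv x' y')"
    unfolding qnorm_def by (intro cInf_lower) (auto intro: bdd_belowI[of _ 0] simp: l1norm_nonneg)
  also have "\<dots> \<le> l1norm x' * l1norm y'" by (rule conv_l1(2)[OF l])
  finally show "qnorm (hJ (conv x y)) \<le> a * b" using xy by simp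
qed

lemma qnorm_neg:
  assumes x: "x \<in> l1"
  shows "qnorm (hJ (\<lambda>s. - x s)) \<le> qnorm (hJ x)"
proof -
  have "qnorm (hJ (\<lambda>s. - x s)) \<le> l1norm x'" if xy: "x' \<in> hJ x" for x'
  proof -
    have l: "x' \<in> l1" using hJ_mem xy x by auto
    have "hJ (\<lambda>s. - x' s) = hJ (\<lambda>s. - x s)"
    proof -
      interpret ideal J A_ring by (rule J_ideal)
      have "(\<lambda>s. - x' s) \<in> hJ (\<lambda>s. - x s)"
      proof -
        obtain j where j: "j \<in> J" "x' = (\<lambda>s. j s + x s)"
          using xy unfolding a_r_coset_def' by (auto simp: A_ring_simps)
        have "\<ominus>\<^bsub>A_ring\<^esub> j \<in> J" using j by simp
        moreover have "\<ominus>\<^bsub>A_ring\<^esub> j = (\<lambda>s. - j s)"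
        proof -
          have jl: "j \<in> l1" using j J_l1 by auto
          show ?thesis
            by (rule minus_equality) (auto simp: A_ring_simps jl l1_neg)
        qed
        ultimately show ?thesis unfolding a_r_coset_def' using j
          by (auto simp: A_ring_simps intro!: bexI[of _ "\<lambda>s. - j s"] ext)
      qed
      then show ?thesis using hJ_eq[OF l1_neg[OF x]] by simp
    qed
    then have "(\<lambda>s. - x' s) \<in> hJ (\<lambda>s. - x s)" using hJ_self[OF l1_neg[OF l]] by simp
    then have "qnorm (hJ (\<lambda>s. - x s)) \<le> l1norm (\<lambda>s. - x' s)"
      unfolding qnorm_def by (intro cInf_lower) (auto intro: bdd_belowI[of _ 0] simp: l1norm_nonneg)
    also have "\<dots> = l1norm x'" by (simp add: l1norm_def)
    finally show ?thesis .
  qed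
  then show ?thesis unfolding qnorm_def[of "hJ x"]
    by (intro cInf_greatest) (use hJ_self[OF x] in auto)
qed



definition rowsum :: "l1elt \<Rightarrow> nat \<Rightarrow> nat set \<Rightarrow> real" where
  "rowsum y n F = (\<Sum>k\<in>F. norm (Mx y n k))"

definition rnorm :: "l1elt \<Rightarrow> real" where
  "rnorm y = Sup {rowsum y n F | n F. finite F}"

lemma rnorm_bdd: "y \<in> l1 \<Longrightarrow> bdd_above {rowsum y n F | n F. finite F}"
  by (rule bdd_aboveI[of _ "l1norm y"]) (auto simp: rowsum_def row_bound)

lemma rowsum_le_rnorm: "y \<in> l1 \<Longrightarrow> finite F \<Longrightarrow> rowsum y n F \<le> rnorm y"
  unfolding rnorm_def by (rule cSup_upper) (auto intro: rnorm_bdd)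

lemma rnorm_least: "(\<And>n F. finite F \<Longrightarrow> rowsum y n F \<le> c) \<Longrightarrow> rnorm y \<le> c"
  unfolding rnorm_def by (rule cSup_least) auto

lemma rnorm_le_l1: "y \<in> l1 \<Longrightarrow> rnorm y \<le> l1norm y"
  by (rule rnorm_least) (simp add: rowsum_def row_bound)

lemma rnorm_nonneg: "y \<in> l1 \<Longrightarrow> 0 \<le> rnorm y"
  using rowsum_le_rnorm[of y "{}" 0] by (simp add: rowsum_def)

lemma rnorm_cong: "(\<And>n k. Mx x n k = Mx y n k) \<Longrightarrow> rnorm x = rnorm y"
  unfolding rnorm_def rowsum_def by simp

lemma rnorm_add: assumes x: "x \<in> l1" and y: "y \<in> l1"
  shows "rnorm (\<lambda>s. x s + y s) \<le> rnorm x + rnorm y"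
proof (rule rnorm_least)
  fix n and F :: "nat set" assume F: "finite F"
  have "rowsum (\<lambda>s. x s + y s) n F \<le> rowsum x n F + rowsum y n F"
    unfolding rowsum_def Mx_add[OF x y] sum.distrib[symmetric] by (rule sum_mono) (rule norm_triangle_ineq)
  also have "\<dots> \<le> rnorm x + rnorm y" using rowsum_le_rnorm[OF x F, of n] rowsum_le_rnorm[OF y F, of n] by simp
  finally show "rowsum (\<lambda>s. x s + y s) n F \<le> rnorm x + rnorm y" .
qed

lemma infsum_finsum:
  fixes f :: "'b \<Rightarrow> 'a \<Rightarrow> real"
  assumes "finite F" "\<And>k. k \<in> F \<Longrightarrow> f k summable_on A"
  shows "(\<lambda>j. \<Sum>k\<in>F. f k j) summable_on A \<and> infsum (\<lambda>j. \<Sum>k\<in>F. f k j) A = (\<Sum>k\<in>F. infsum (f k) A)"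
  using assms
proof (induction F rule: finite_induct)
  case (insert x F)
  then have s: "f x summable_on A" "(\<lambda>j. \<Sum>k\<in>F. f k j) summable_on A" by auto
  then show ?case using insert by (simp add: summable_on_add infsum_add)
qed simp

lemma rnorm_mult: assumes x: "x \<in> l1" and y: "y \<in> l1"
  shows "rnorm (conv x y) \<le> rnorm x * rnorm y"
proof (rule rnorm_least)
  fix n and F :: "nat set" assume F: "finite F"
  let ?a = "\<lambda>j. norm (Mx x n j)"
  have asum: "?a summable_on UNIV"
    by (rule nonneg_bdd_above_summable_on)
       (auto intro!: bdd_aboveI[of _ "rnorm x"] simp: rowsum_le_rnorm[OF x, unfolded rowsum_def])
  have ainf: "infsum ?a UNIV \<le> rnorm x"
    by (rule infsum_le_finite_sums[OF asum]) (simp add: rowsum_le_rnorm[OF x, unfolded rowsum_def])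
  have bnd1: "(\<lambda>j. ?a j * l1norm y) summable_on UNIV" using asum by (rule summable_on_cmult_left)
  have sk: "(\<lambda>j. ?a j * norm (Mx y j k)) summable_on UNIV" for k
    by (rule summable_on_comparison_test[OF bnd1])
       (auto intro: mult_left_mono Mx_bound[OF y])
  have bnd_k: "norm (Mx (conv x y) n k) \<le> (\<Sum>\<^sub>\<infinity>j. ?a j * norm (Mx y j k))" for k
  proof -
    have "(\<lambda>j. norm (Mx x n j * Mx y j k)) summable_on UNIV" using sk[of k] by (simp add: norm_mult)
    then have "norm (\<Sum>\<^sub>\<infinity>j. Mx x n j * Mx y j k) \<le> (\<Sum>\<^sub>\<infinity>j. norm (Mx x n j * Mx y j k))"
      by (rule norm_infsum_bound)
    then show ?thesis using Mx_conv(2)[OF x y] by (simp add: norm_mult)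
  qed
  have sw: "(\<lambda>j. \<Sum>k\<in>F. ?a j * norm (Mx y j k)) summable_on UNIV \<and>
        infsum (\<lambda>j. \<Sum>k\<in>F. ?a j * norm (Mx y j k)) UNIV = (\<Sum>k\<in>F. infsum (\<lambda>j. ?a j * norm (Mx y j k)) UNIV)"
    by (rule infsum_finsum[OF F]) (rule sk)
  have "rowsum (conv x y) n F \<le> (\<Sum>k\<in>F. \<Sum>\<^sub>\<infinity>j. ?a j * norm (Mx y j k))"
    unfolding rowsum_def by (rule sum_mono) (rule bnd_k)
  also have "\<dots> = infsum (\<lambda>j. \<Sum>k\<in>F. ?a j * norm (Mx y j k)) UNIV" using sw by simp
  also have "\<dots> \<le> infsum (\<lambda>j. ?a j * rnorm y) UNIV"
  proof (rule infsum_mono)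
    show "(\<lambda>j. \<Sum>k\<in>F. ?a j * norm (Mx y j k)) summable_on UNIV" using sw by simp
    show "(\<lambda>j. ?a j * rnorm y) summable_on UNIV" using asum by (rule summable_on_cmult_left)
    fix j
    have "(\<Sum>k\<in>F. ?a j * norm (Mx y j k)) = ?a j * rowsum y j F"
      by (simp add: rowsum_def sum_distrib_left)
    also have "\<dots> \<le> ?a j * rnorm y" by (rule mult_left_mono) (auto intro: rowsum_le_rnorm[OF y F])
    finally show "(\<Sum>k\<in>F. ?a j * norm (Mx y j k)) \<le> ?a j * rnorm y" .
  qed
  also have "\<dots> = infsum ?a UNIV * rnorm y" by (rule infsum_cmult_left')
  also have "\<dots> \<le> rnorm x * rnorm y" by (rule mult_right_mono[OF ainf rnorm_nonneg[OF y]])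
  finally show "rowsum (conv x y) n F \<le> rnorm x * rnorm y" .
qed

definition rn :: "l1elt set \<Rightarrow> real" where
  "rn C = rnorm (SOME y. y \<in> C)"

lemma rn_hJ: "x \<in> l1 \<Longrightarrow> rn (hJ x) = rnorm x"
proof -
  assume x: "x \<in> l1"
  have "(SOME y. y \<in> hJ x) \<in> hJ x" using someI[where P="\<lambda>y. y \<in> hJ x", OF hJ_self[OF x]] .
  then show ?thesis unfolding rn_def using hJ_mem(2)[OF x] by (intro rnorm_cong) auto
qed

lemma rnorm_le_qnorm: "x \<in> l1 \<Longrightarrow> rnorm x \<le> qnorm (hJ x)"
proof (rule qnorm_ge)
  fix y assume x: "x \<in> l1" and y: "y \<in> hJ x"
  have "rnorm x = rnorm y" using hJ_mem(2)[OF x y] by (intro rnorm_cong) auto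
  then show "rnorm x \<le> l1norm y" using rnorm_le_l1 hJ_mem(1)[OF x y] by simp
qed

lemma col_qnorm: "x \<in> l1 \<Longrightarrow> finite F \<Longrightarrow> (\<Sum>n\<in>F. norm (Mx x n k)) \<le> qnorm (hJ x)"
proof (rule qnorm_ge)
  fix y assume x: "x \<in> l1" and F: "finite F" and y: "y \<in> hJ x"
  have "(\<Sum>n\<in>F. norm (Mx x n k)) = (\<Sum>n\<in>F. norm (Mx y n k))" using hJ_mem(2)[OF x y] by simp
  then show "(\<Sum>n\<in>F. norm (Mx x n k)) \<le> l1norm y" using col_bound hJ_mem(1)[OF x y] F by simp
qed



lemma AJ_carrier_E: "C \<in> carrier AJ \<Longrightarrow> (\<And>x. x \<in> l1 \<Longrightarrow> C = hJ x \<Longrightarrow> P) \<Longrightarrow> P"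
  using AJ_carrier by auto

lemma AJ_neg: "x \<in> l1 \<Longrightarrow> \<ominus>\<^bsub>AJ\<^esub> (hJ x) = hJ (\<lambda>s. - x s)"
proof -
  assume x: "x \<in> l1"
  interpret R: ring AJ by (rule AJ_ring)
  have "hJ (\<lambda>s. - x s) \<oplus>\<^bsub>AJ\<^esub> hJ x = hJ (\<lambda>_. 0)"
    using AJ_add[OF l1_neg[OF x] x] by simp
  then show ?thesis
    by (intro R.minus_equality) (auto simp: AJ_zero AJ_carrier x l1_neg)
qed

lemma qC_nonneg: "C \<in> carrier AJ \<Longrightarrow> 0 \<le> qnorm C"
  by (auto elim!: AJ_carrier_E simp: qnorm_nonneg)

lemma qC_add: "C \<in> carrier AJ \<Longrightarrow> D \<in> carrier AJ \<Longrightarrow> qnorm (C \<oplus>\<^bsub>AJ\<^esub> D) \<le> qnorm C + qnorm D"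
  by (auto elim!: AJ_carrier_E simp: AJ_add qnorm_add)

lemma qC_mult: "C \<in> carrier AJ \<Longrightarrow> D \<in> carrier AJ \<Longrightarrow> qnorm (C \<otimes>\<^bsub>AJ\<^esub> D) \<le> qnorm C * qnorm D"
  by (auto elim!: AJ_carrier_E simp: AJ_mult qnorm_mult)

lemma qC_neg: "C \<in> carrier AJ \<Longrightarrow> qnorm (\<ominus>\<^bsub>AJ\<^esub> C) \<le> qnorm C"
  by (auto elim!: AJ_carrier_E simp: AJ_neg qnorm_neg)

lemma qC_zero: "qnorm \<zero>\<^bsub>AJ\<^esub> = 0"
  using qnorm_le[OF l1_zero_fun] qnorm_nonneg[OF l1_zero_fun] by (simp add: AJ_zero l1norm_def)

lemma rC_nonneg: "C \<in> carrier AJ \<Longrightarrow> 0 \<le> rn C"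
  by (auto elim!: AJ_carrier_E simp: rn_hJ rnorm_nonneg)

lemma rC_add: "C \<in> carrier AJ \<Longrightarrow> D \<in> carrier AJ \<Longrightarrow> rn (C \<oplus>\<^bsub>AJ\<^esub> D) \<le> rn C + rn D"
  by (auto elim!: AJ_carrier_E simp: AJ_add rn_hJ l1_add rnorm_add)

lemma rC_mult: "C \<in> carrier AJ \<Longrightarrow> D \<in> carrier AJ \<Longrightarrow> rn (C \<otimes>\<^bsub>AJ\<^esub> D) \<le> rn C * rn D"
  by (auto elim!: AJ_carrier_E simp: AJ_mult rn_hJ conv_l1 rnorm_mult)

lemma rC_q: "C \<in> carrier AJ \<Longrightarrow> rn C \<le> qnorm C"
  by (auto elim!: AJ_carrier_E simp: rn_hJ rnorm_le_qnorm)

lemma rC_zero: "rn \<zero>\<^bsub>AJ\<^esub> = 0"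
  using rnorm_le_l1[OF l1_zero_fun] rnorm_nonneg[OF l1_zero_fun] by (simp add: AJ_zero rn_hJ l1_zero_fun l1norm_def)

abbreviation L where "L \<equiv> linf AJ qnorm"

lemma L_simps: "carrier L = {X. (\<forall>n. X n \<in> carrier AJ) \<and> (\<exists>M. \<forall>n. qnorm (X n) \<le> M)}"
  "mult L = (\<lambda>X Y n. X n \<otimes>\<^bsub>AJ\<^esub> Y n)" "one L = (\<lambda>n. \<one>\<^bsub>AJ\<^esub>)"
  "zero L = (\<lambda>n. \<zero>\<^bsub>AJ\<^esub>)" "add L = (\<lambda>X Y n. X n \<oplus>\<^bsub>AJ\<^esub> Y n)"
  unfolding linf_def by simp_all

lemma L_mem: "X \<in> carrier L \<Longrightarrow> X n \<in> carrier AJ"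
  by (auto simp: L_simps)

lemma L_const: "C \<in> carrier AJ \<Longrightarrow> (\<lambda>n. C) \<in> carrier L"
  by (auto simp: L_simps)

lemma L_ring: "ring L"
proof -
  interpret R: ring AJ by (rule AJ_ring)
  have addc: "(\<lambda>n. X n \<oplus>\<^bsub>AJ\<^esub> Y n) \<in> carrier L" if xy: "X \<in> carrier L" "Y \<in> carrier L" for X Y
  proof -
    obtain M1 M2 where M: "\<forall>n. qnorm (X n) \<le> M1" "\<forall>n. qnorm (Y n) \<le> M2" and c: "\<forall>n. X n \<in> carrier AJ" "\<forall>n. Y n \<in> carrier AJ"
      using xy by (auto simp: L_simps)
    have "qnorm (X n \<oplus>\<^bsub>AJ\<^esub> Y n) \<le> M1 + M2" for n
      using qC_add[of "X n" "Y n"] c M by (smt (verit))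
    then show ?thesis using c by (auto simp: L_simps)
  qed
  have mulc: "(\<lambda>n. X n \<otimes>\<^bsub>AJ\<^esub> Y n) \<in> carrier L" if xy: "X \<in> carrier L" "Y \<in> carrier L" for X Y
  proof -
    obtain M1 M2 where M: "\<forall>n. qnorm (X n) \<le> M1" "\<forall>n. qnorm (Y n) \<le> M2" and c: "\<forall>n. X n \<in> carrier AJ" "\<forall>n. Y n \<in> carrier AJ"
      using xy by (auto simp: L_simps)
    have "qnorm (X n \<otimes>\<^bsub>AJ\<^esub> Y n) \<le> M1 * M2" for n
    proof -
      have "qnorm (X n \<otimes>\<^bsub>AJ\<^esub> Y n) \<le> qnorm (X n) * qnorm (Y n)" using qC_mult c by auto
      also have "\<dots> \<le> M1 * M2" using M c qC_nonneg by (meson mult_mono order_trans)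
      finally show ?thesis .
    qed
    then show ?thesis using c by (auto simp: L_simps)
  qed
  have invc: "\<exists>Y\<in>carrier L. (\<lambda>n. Y n \<oplus>\<^bsub>AJ\<^esub> X n) = (\<lambda>n. \<zero>\<^bsub>AJ\<^esub>)" if xy: "X \<in> carrier L" for X
  proof -
    obtain M where M: "\<forall>n. qnorm (X n) \<le> M" and c: "\<forall>n. X n \<in> carrier AJ"
      using xy by (auto simp: L_simps)
    have "qnorm (\<ominus>\<^bsub>AJ\<^esub> X n) \<le> M" for n using qC_neg c M order_trans by blast
    then have "(\<lambda>n. \<ominus>\<^bsub>AJ\<^esub> X n) \<in> carrier L" using c by (auto simp: L_simps)
    then show ?thesis using c by (intro bexI[of _ "\<lambda>n. \<ominus>\<^bsub>AJ\<^esub> X n"]) (auto simp: fun_eq_iff R.l_neg)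
  qed
  show ?thesis
  proof (rule ringI)
    show "abelian_group L"
    proof (rule abelian_groupI)
      show "\<And>x y. x \<in> carrier L \<Longrightarrow> y \<in> carrier L \<Longrightarrow> x \<oplus>\<^bsub>L\<^esub> y \<in> carrier L"
        using addc by (simp add: L_simps(5))
      show "\<zero>\<^bsub>L\<^esub> \<in> carrier L" by (simp add: L_simps(4) L_const)
      show "\<And>x y z. x \<in> carrier L \<Longrightarrow> y \<in> carrier L \<Longrightarrow> z \<in> carrier L \<Longrightarrow>
          x \<oplus>\<^bsub>L\<^esub> y \<oplus>\<^bsub>L\<^esub> z = x \<oplus>\<^bsub>L\<^esub> (y \<oplus>\<^bsub>L\<^esub> z)"
        by (simp add: L_simps(5) L_mem R.a_assoc)
      show "\<And>x y. x \<in> carrier L \<Longrightarrow> y \<in> carrier L \<Longrightarrow> x \<oplus>\<^bsub>L\<^esub> y = y \<oplus>\<^bsub>L\<^esub> x"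
        by (simp add: L_simps(5) fun_eq_iff) (metis L_mem R.a_comm)
      show "\<And>x. x \<in> carrier L \<Longrightarrow> \<zero>\<^bsub>L\<^esub> \<oplus>\<^bsub>L\<^esub> x = x"
        by (simp add: L_simps(4,5) L_mem)
      show "\<And>x. x \<in> carrier L \<Longrightarrow> \<exists>y\<in>carrier L. y \<oplus>\<^bsub>L\<^esub> x = \<zero>\<^bsub>L\<^esub>"
        using invc by (simp add: L_simps(4,5))
    qed
    show "monoid L"
      by (rule monoidI)
         (auto simp: L_simps(2-5) mulc L_mem L_const R.m_assoc fun_eq_iff)
  qed (auto simp: L_simps(2-5) L_mem R.l_distr R.r_distr fun_eq_iff)
qed



lemma cU_simp: "cU AJ qnorm U = {X \<in> carrier L. ((\<lambda>n. qnorm (X n)) \<longlongrightarrow> 0) U}"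
  unfolding cU_def by simp

lemma L_bound: "X \<in> carrier L \<Longrightarrow> \<exists>M. \<forall>n. qnorm (X n) \<le> M"
  by (auto simp: L_simps)

lemma cU_ideal: "ideal (cU AJ qnorm U) L"
proof -
  interpret R: ring AJ by (rule AJ_ring)
  show ?thesis
  proof (rule ideal_simple[OF L_ring])
    show "cU AJ qnorm U \<subseteq> carrier L" by (auto simp: cU_simp)
    show "\<zero>\<^bsub>L\<^esub> \<in> cU AJ qnorm U"
      by (auto simp: cU_simp L_simps(4) qC_zero L_const)
    show "a \<oplus>\<^bsub>L\<^esub> b \<in> cU AJ qnorm U" if ab: "a \<in> cU AJ qnorm U" "b \<in> cU AJ qnorm U" for a b
    proof -
      have c: "a \<in> carrier L" "b \<in> carrier L" and la: "((\<lambda>n. qnorm (a n)) \<longlongrightarrow> 0) U"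
        and lb: "((\<lambda>n. qnorm (b n)) \<longlongrightarrow> 0) U" using ab by (auto simp: cU_simp)
      have cl: "a \<oplus>\<^bsub>L\<^esub> b \<in> carrier L" using c ring.ring_simprules(1)[OF L_ring] by blast
      have "((\<lambda>n. qnorm (a n \<oplus>\<^bsub>AJ\<^esub> b n)) \<longlongrightarrow> 0) U"
      proof (rule tendsto_sandwich[where f="\<lambda>_. 0" and h="\<lambda>n. qnorm (a n) + qnorm (b n)"])
        show "\<forall>\<^sub>F n in U. 0 \<le> qnorm (a n \<oplus>\<^bsub>AJ\<^esub> b n)"
          using c by (intro always_eventually allI qC_nonneg R.a_closed L_mem)
        show "\<forall>\<^sub>F n in U. qnorm (a n \<oplus>\<^bsub>AJ\<^esub> b n) \<le> qnorm (a n) + qnorm (b n)"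
          using c by (intro always_eventually allI qC_add L_mem)
        show "((\<lambda>n. qnorm (a n) + qnorm (b n)) \<longlongrightarrow> 0) U" using tendsto_add[OF la lb] by simp
      qed simp
      then show ?thesis using cl by (simp add: cU_simp L_simps(5))
    qed
    show "x \<otimes>\<^bsub>L\<^esub> a \<in> cU AJ qnorm U" if ax: "a \<in> cU AJ qnorm U" "x \<in> carrier L" for a x
    proof -
      have c: "a \<in> carrier L" "x \<in> carrier L" and la: "((\<lambda>n. qnorm (a n)) \<longlongrightarrow> 0) U"
        using ax by (auto simp: cU_simp)
      obtain M where M: "\<forall>n. qnorm (x n) \<le> M" using L_bound[OF c(2)] by auto
      have cl: "x \<otimes>\<^bsub>L\<^esub> a \<in> carrier L" using c ring.ring_simprules(5)[OF L_ring] by blast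
      have "((\<lambda>n. qnorm (x n \<otimes>\<^bsub>AJ\<^esub> a n)) \<longlongrightarrow> 0) U"
      proof (rule tendsto_sandwich[where f="\<lambda>_. 0" and h="\<lambda>n. M * qnorm (a n)"])
        show "\<forall>\<^sub>F n in U. 0 \<le> qnorm (x n \<otimes>\<^bsub>AJ\<^esub> a n)"
          using c by (intro always_eventually allI qC_nonneg R.m_closed L_mem)
        show "\<forall>\<^sub>F n in U. qnorm (x n \<otimes>\<^bsub>AJ\<^esub> a n) \<le> M * qnorm (a n)"
        proof (rule always_eventually, rule allI)
          fix n
          have "qnorm (x n \<otimes>\<^bsub>AJ\<^esub> a n) \<le> qnorm (x n) * qnorm (a n)" using c by (auto intro!: qC_mult L_mem)
          also have "\<dots> \<le> M * qnorm (a n)" using M c by (auto intro!: mult_right_mono qC_nonneg L_mem)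
          finally show "qnorm (x n \<otimes>\<^bsub>AJ\<^esub> a n) \<le> M * qnorm (a n)" .
        qed
        show "((\<lambda>n. M * qnorm (a n)) \<longlongrightarrow> 0) U" using tendsto_mult[OF tendsto_const la, of M] by simp
      qed simp
      then show ?thesis using cl by (simp add: cU_simp L_simps(2))
    qed
    show "a \<otimes>\<^bsub>L\<^esub> x \<in> cU AJ qnorm U" if ax: "a \<in> cU AJ qnorm U" "x \<in> carrier L" for a x
    proof -
      have c: "a \<in> carrier L" "x \<in> carrier L" and la: "((\<lambda>n. qnorm (a n)) \<longlongrightarrow> 0) U"
        using ax by (auto simp: cU_simp)
      obtain M where M: "\<forall>n. qnorm (x n) \<le> M" using L_bound[OF c(2)] by auto
      have cl: "a \<otimes>\<^bsub>L\<^esub> x \<in> carrier L" using c ring.ring_simprules(5)[OF L_ring] by blast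
      have "((\<lambda>n. qnorm (a n \<otimes>\<^bsub>AJ\<^esub> x n)) \<longlongrightarrow> 0) U"
      proof (rule tendsto_sandwich[where f="\<lambda>_. 0" and h="\<lambda>n. M * qnorm (a n)"])
        show "\<forall>\<^sub>F n in U. 0 \<le> qnorm (a n \<otimes>\<^bsub>AJ\<^esub> x n)"
          using c by (intro always_eventually allI qC_nonneg R.m_closed L_mem)
        show "\<forall>\<^sub>F n in U. qnorm (a n \<otimes>\<^bsub>AJ\<^esub> x n) \<le> M * qnorm (a n)"
        proof (rule always_eventually, rule allI)
          fix n
          have "qnorm (a n \<otimes>\<^bsub>AJ\<^esub> x n) \<le> qnorm (a n) * qnorm (x n)" using c by (auto intro!: qC_mult L_mem)
          also have "\<dots> \<le> M * qnorm (a n)" using M c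
            by (metis mult.commute mult_right_mono qC_nonneg L_mem)
          finally show "qnorm (a n \<otimes>\<^bsub>AJ\<^esub> x n) \<le> M * qnorm (a n)" .
        qed
        show "((\<lambda>n. M * qnorm (a n)) \<longlongrightarrow> 0) U" using tendsto_mult[OF tendsto_const la, of M] by simp
      qed simp
      then show ?thesis using cl by (simp add: cU_simp L_simps(2))
    qed
  qed
qed

abbreviation UP where "UP U \<equiv> ultrapower AJ qnorm U"
abbreviation HU where "HU U X \<equiv> cU AJ qnorm U +>\<^bsub>L\<^esub> X"

lemma UP_ring: "ring (UP U)"
  unfolding ultrapower_def by (rule ideal.quotient_is_ring[OF cU_ideal])

lemma HU_hom: "HU U \<in> ring_hom L (UP U)"
  unfolding ultrapower_def by (rule ideal.rcos_ring_hom[OF cU_ideal])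

lemma UP_carrier: "carrier (UP U) = HU U ` carrier L"
  unfolding ultrapower_def FactRing_def A_RCOSETS_def' by auto

lemma UP_zero: "\<zero>\<^bsub>UP U\<^esub> = cU AJ qnorm U"
  unfolding ultrapower_def FactRing_def by simp

lemma UP_one: "\<one>\<^bsub>UP U\<^esub> = HU U \<one>\<^bsub>L\<^esub>"
  unfolding ultrapower_def FactRing_def by simp

lemma HU_self: "X \<in> carrier L \<Longrightarrow> X \<in> HU U X"
proof -
  assume X: "X \<in> carrier L"
  interpret ideal "cU AJ qnorm U" L by (rule cU_ideal)
  show ?thesis using a_rcos_self[OF X] .
qed



definition wj :: "nat \<Rightarrow> gen list" where "wj j = replicate j S1 @ [S2]"

lemma phi_wj: "phi (wj j) k = Some (2^j * (2*k+1))"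
  by (induction j) (auto simp: wj_def)

lemma pow2_odd_inj: "(2::nat)^j * (2*k+1) = 2^j' * (2*k'+1) \<Longrightarrow> j = j' \<and> k = k'"
proof (induction j arbitrary: j')
  case 0
  then show ?case by (cases j') (auto dest!: arg_cong[where f="even::nat\<Rightarrow>bool"])
next
  case (Suc j)
  note IH = Suc.IH and P = Suc.prems
  show ?case
  proof (cases j')
    case 0
    with P show ?thesis by (auto dest!: arg_cong[where f="even::nat\<Rightarrow>bool"])
  next
    case (Suc m)
    with P have "(2::nat)^j * (2*k+1) = 2^m * (2*k'+1)" by simp
    with IH Suc show ?thesis by auto
  qed
qed

definition cN :: "nat \<Rightarrow> gen list set" where "cN j = cu_cls (wj j)"

lemma cphi_cN: "cphi (cN j) k = Some (2^j * (2*k+1))"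
  by (simp add: cN_def cphi_cls phi_wj)

lemma cN_nz: "cN j \<in> nz"
  by (rule nz_if_phi[of _ 0]) (auto simp: cN_def cls_in_Cu2 cphi_cls phi_wj)

lemma cN_inj: "inj cN"
proof (rule injI)
  fix j j' assume "cN j = cN j'"
  then have "cphi (cN j) 0 = cphi (cN j') 0" by simp
  then show "j = j'" using pow2_odd_inj[of j 0 j' 0] by (simp add: cphi_cN)
qed

definition Cs :: "nat \<Rightarrow> gen list set set" where "Cs N = cN ` {..<N}"

definition xs :: "nat \<Rightarrow> l1elt" where
  "xs N s = (if s \<in> Cs N then 1 / of_nat N else 0)"

lemma Cs_sub: "Cs N \<subseteq> nz" using cN_nz by (auto simp: Cs_def)
lemma Cs_fin: "finite (Cs N)" by (simp add: Cs_def)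
lemma Cs_card: "card (Cs N) = N" unfolding Cs_def using cN_inj
  by (simp add: card_image inj_on_subset)

lemma xs_l1: "xs N \<in> l1"
proof (rule l1I)
  show "xs N s = 0" if "s \<notin> nz" for s using that Cs_sub by (auto simp: xs_def)
  show "(\<lambda>x. norm (xs N x)) summable_on nz"
    by (rule finite_nonzero_values_imp_summable_on, rule finite_subset[OF _ Cs_fin])
       (auto simp: xs_def split: if_split_asm)
qed

lemma xs_l1norm: "N \<ge> 1 \<Longrightarrow> l1norm (xs N) \<le> 1"
proof -
  assume N: "N \<ge> 1"
  have "l1norm (xs N) = infsum (\<lambda>s. norm (xs N s)) (Cs N)"
    unfolding l1norm_def by (rule infsum_cong_neutral) (use Cs_sub in \<open>auto simp: xs_def\<close>)
  also have "\<dots> = (\<Sum>s\<in>Cs N. 1 / real N)" using Cs_fin by (simp add: xs_def norm_divide)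
  also have "\<dots> = 1" using Cs_card N by simp
  finally show ?thesis by simp
qed

lemma Mx_xs: "Mx (xs N) n k = of_nat (card (Cs N \<inter> Fb k n)) / of_nat N"
proof -
  have "Mx (xs N) n k = infsum (xs N) (Cs N \<inter> Fb k n)"
    unfolding Mx_def by (rule infsum_cong_neutral) (auto simp: xs_def)
  also have "\<dots> = (\<Sum>s\<in>Cs N \<inter> Fb k n. 1 / of_nat N)"
    using Cs_fin by (simp add: xs_def)
  finally show ?thesis by simp
qed

lemma row_xs: assumes N: "N \<ge> 1" shows "rnorm (xs N) \<le> 1 / real N"
proof (rule rnorm_least)
  fix n and F :: "nat set" assume F: "finite F"
  let ?B = "\<lambda>k. Cs N \<inter> Fb k n"
  have fin: "finite (?B k)" for k using Cs_fin by simp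
  have disj: "\<forall>i\<in>F. \<forall>j\<in>F. i \<noteq> j \<longrightarrow> ?B i \<inter> ?B j = {}"
    by (auto simp: Fb_def dest: cphi_inj)
  have one: "card (\<Union>k\<in>F. ?B k) \<le> 1"
  proof -
    have fin2: "finite (\<Union>k\<in>F. ?B k)" using F fin by (intro finite_UN_I) auto
    have "a = b" if ab: "a \<in> (\<Union>k\<in>F. ?B k)" "b \<in> (\<Union>k\<in>F. ?B k)" for a b
    proof -
      obtain j k j' k' where "a = cN j" "b = cN j'" "cphi (cN j) k = Some n" "cphi (cN j') k' = Some n"
        using ab by (auto simp: Cs_def Fb_def)
      then show ?thesis using pow2_odd_inj[of j k j' k'] by (auto simp: cphi_cN)
    qed
    then have "\<forall>a\<in>(\<Union>k\<in>F. ?B k). \<forall>b\<in>(\<Union>k\<in>F. ?B k). a = b" by blast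
    then show ?thesis using card_le_Suc0_iff_eq[OF fin2] by simp
  qed
  have "rowsum (xs N) n F = (\<Sum>k\<in>F. real (card (?B k)) / real N)"
    unfolding rowsum_def Mx_xs by (simp add: norm_divide)
  also have "\<dots> = real (\<Sum>k\<in>F. card (?B k)) / real N" by (simp add: sum_divide_distrib)
  also have "(\<Sum>k\<in>F. card (?B k)) = card (\<Union>k\<in>F. ?B k)"
    using card_UN_disjoint[OF F, of ?B] fin disj by simp
  also have "real (card (\<Union>k\<in>F. ?B k)) / real N \<le> 1 / real N"
    using one N by (simp add: divide_right_mono)
  finally show "rowsum (xs N) n F \<le> 1 / real N" .
qed

lemma col_xs: assumes N: "N \<ge> 1" shows "1 \<le> qnorm (hJ (xs N))"
proof -
  let ?F = "(\<lambda>j. (2::nat)^j) ` {..<N}"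
  have inj: "inj_on (\<lambda>j. (2::nat)^j) {..<N}" by (auto simp: inj_on_def)
  have c1: "Cs N \<inter> Fb 0 (2^j) = {cN j}" if "j < N" for j
  proof -
    have "s = cN j" if "s \<in> Cs N \<inter> Fb 0 (2^j)" for s
      using that pow2_odd_inj[of _ 0 j 0] by (auto simp: Cs_def Fb_def cphi_cN)
    moreover have "cN j \<in> Cs N \<inter> Fb 0 (2^j)" using \<open>j < N\<close> cN_nz by (auto simp: Cs_def Fb_def cphi_cN)
    ultimately show ?thesis by blast
  qed
  have "(\<Sum>n\<in>?F. norm (Mx (xs N) n 0)) = (\<Sum>j<N. norm (Mx (xs N) (2^j) 0))"
    by (simp add: sum.reindex[OF inj])
  also have "\<dots> = (\<Sum>j<N. 1 / real N)" by (rule sum.cong) (auto simp: Mx_xs c1 norm_divide)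
  also have "\<dots> = 1" using N by simp
  finally show ?thesis using col_qnorm[where x="xs N" and F="?F" and k=0, OF xs_l1] by simp
qed



definition Kset :: "nat filter \<Rightarrow> (nat \<Rightarrow> l1elt set) set set" where
  "Kset U = {HU U X | X. X \<in> carrier L \<and> ((\<lambda>n. rn (X n)) \<longlongrightarrow> 0) U}"

lemma UP_carrier_E: "a \<in> carrier (UP U) \<Longrightarrow> (\<And>X. X \<in> carrier L \<Longrightarrow> a = HU U X \<Longrightarrow> P) \<Longrightarrow> P"
  using UP_carrier by blast

lemma K_ideal: "ideal (Kset U) (UP U)"
proof -
  interpret R: ring AJ by (rule AJ_ring)
  interpret LR: ring L by (rule L_ring)
  show ?thesis
  proof (rule ideal_simple[OF UP_ring])
    show "Kset U \<subseteq> carrier (UP U)" by (auto simp: Kset_def UP_carrier)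
    have "\<zero>\<^bsub>UP U\<^esub> = HU U \<zero>\<^bsub>L\<^esub>" using ring_hom_zero[OF HU_hom L_ring UP_ring] by simp
    then show "\<zero>\<^bsub>UP U\<^esub> \<in> Kset U"
      unfolding Kset_def by (auto simp: L_simps(4) rC_zero intro!: exI[of _ "\<lambda>n. \<zero>\<^bsub>AJ\<^esub>"] L_const)
    show "a \<oplus>\<^bsub>UP U\<^esub> b \<in> Kset U" if ab: "a \<in> Kset U" "b \<in> Kset U" for a b
    proof -
      obtain X Y where X: "a = HU U X" "X \<in> carrier L" "((\<lambda>n. rn (X n)) \<longlongrightarrow> 0) U"
        and Y: "b = HU U Y" "Y \<in> carrier L" "((\<lambda>n. rn (Y n)) \<longlongrightarrow> 0) U"
        using ab unfolding Kset_def by blast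
      have e: "a \<oplus>\<^bsub>UP U\<^esub> b = HU U (X \<oplus>\<^bsub>L\<^esub> Y)" using ring_hom_add[OF HU_hom X(2) Y(2)] X Y by simp
      have "((\<lambda>n. rn (X n \<oplus>\<^bsub>AJ\<^esub> Y n)) \<longlongrightarrow> 0) U"
      proof (rule tendsto_sandwich[where f="\<lambda>_. 0" and h="\<lambda>n. rn (X n) + rn (Y n)"])
        show "\<forall>\<^sub>F n in U. 0 \<le> rn (X n \<oplus>\<^bsub>AJ\<^esub> Y n)"
          using X Y by (intro always_eventually allI rC_nonneg R.a_closed L_mem)
        show "\<forall>\<^sub>F n in U. rn (X n \<oplus>\<^bsub>AJ\<^esub> Y n) \<le> rn (X n) + rn (Y n)"
          using X Y by (intro always_eventually allI rC_add L_mem)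
        show "((\<lambda>n. rn (X n) + rn (Y n)) \<longlongrightarrow> 0) U" using tendsto_add[OF X(3) Y(3)] by simp
      qed simp
      moreover have "(\<lambda>n. X n \<oplus>\<^bsub>AJ\<^esub> Y n) \<in> carrier L"
        using LR.a_closed[OF X(2) Y(2)] by (simp add: L_simps(5))
      ultimately show ?thesis unfolding Kset_def e L_simps(5) by blast
    qed
    show "x \<otimes>\<^bsub>UP U\<^esub> a \<in> Kset U" if ax: "a \<in> Kset U" "x \<in> carrier (UP U)" for a x
    proof -
      obtain X where X: "a = HU U X" "X \<in> carrier L" "((\<lambda>n. rn (X n)) \<longlongrightarrow> 0) U"
        using ax unfolding Kset_def by blast
      obtain Y where Y: "x = HU U Y" "Y \<in> carrier L" using ax UP_carrier_E by metis
      obtain M where M: "\<forall>n. qnorm (Y n) \<le> M" using L_bound[OF Y(2)] by auto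
      have e: "x \<otimes>\<^bsub>UP U\<^esub> a = HU U (Y \<otimes>\<^bsub>L\<^esub> X)" using ring_hom_mult[OF HU_hom Y(2) X(2)] X Y by simp
      have "((\<lambda>n. rn (Y n \<otimes>\<^bsub>AJ\<^esub> X n)) \<longlongrightarrow> 0) U"
      proof (rule tendsto_sandwich[where f="\<lambda>_. 0" and h="\<lambda>n. M * rn (X n)"])
        show "\<forall>\<^sub>F n in U. 0 \<le> rn (Y n \<otimes>\<^bsub>AJ\<^esub> X n)"
          using X Y by (intro always_eventually allI rC_nonneg R.m_closed L_mem)
        show "\<forall>\<^sub>F n in U. rn (Y n \<otimes>\<^bsub>AJ\<^esub> X n) \<le> M * rn (X n)"
        proof (rule always_eventually, rule allI)
          fix n
          have c: "X n \<in> carrier AJ" "Y n \<in> carrier AJ" using X Y L_mem by auto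
          have "rn (Y n \<otimes>\<^bsub>AJ\<^esub> X n) \<le> rn (Y n) * rn (X n)" by (rule rC_mult[OF c(2) c(1)])
          also have "\<dots> \<le> M * rn (X n)"
            using M rC_q[OF c(2)] rC_nonneg[OF c(1)] by (meson mult_right_mono order_trans)
          finally show "rn (Y n \<otimes>\<^bsub>AJ\<^esub> X n) \<le> M * rn (X n)" .
        qed
        show "((\<lambda>n. M * rn (X n)) \<longlongrightarrow> 0) U" using tendsto_mult[OF tendsto_const X(3), of M] by simp
      qed simp
      moreover have "Y \<otimes>\<^bsub>L\<^esub> X \<in> carrier L" using X Y by simp
      ultimately show ?thesis unfolding Kset_def e by (auto simp: L_simps(2))
    qed
    show "a \<otimes>\<^bsub>UP U\<^esub> x \<in> Kset U" if ax: "a \<in> Kset U" "x \<in> carrier (UP U)" for a x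
    proof -
      obtain X where X: "a = HU U X" "X \<in> carrier L" "((\<lambda>n. rn (X n)) \<longlongrightarrow> 0) U"
        using ax unfolding Kset_def by blast
      obtain Y where Y: "x = HU U Y" "Y \<in> carrier L" using ax UP_carrier_E by metis
      obtain M where M: "\<forall>n. qnorm (Y n) \<le> M" using L_bound[OF Y(2)] by auto
      have e: "a \<otimes>\<^bsub>UP U\<^esub> x = HU U (X \<otimes>\<^bsub>L\<^esub> Y)" using ring_hom_mult[OF HU_hom X(2) Y(2)] X Y by simp
      have "((\<lambda>n. rn (X n \<otimes>\<^bsub>AJ\<^esub> Y n)) \<longlongrightarrow> 0) U"
      proof (rule tendsto_sandwich[where f="\<lambda>_. 0" and h="\<lambda>n. M * rn (X n)"])
        show "\<forall>\<^sub>F n in U. 0 \<le> rn (X n \<otimes>\<^bsub>AJ\<^esub> Y n)"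
          using X Y by (intro always_eventually allI rC_nonneg R.m_closed L_mem)
        show "\<forall>\<^sub>F n in U. rn (X n \<otimes>\<^bsub>AJ\<^esub> Y n) \<le> M * rn (X n)"
        proof (rule always_eventually, rule allI)
          fix n
          have c: "X n \<in> carrier AJ" "Y n \<in> carrier AJ" using X Y L_mem by auto
          have "rn (X n \<otimes>\<^bsub>AJ\<^esub> Y n) \<le> rn (X n) * rn (Y n)" by (rule rC_mult[OF c(1) c(2)])
          also have "\<dots> \<le> M * rn (X n)"
            using M rC_q[OF c(2)] rC_nonneg[OF c(1)]
            by (metis mult.commute mult_right_mono order_trans)
          finally show "rn (X n \<otimes>\<^bsub>AJ\<^esub> Y n) \<le> M * rn (X n)" .
        qed
        show "((\<lambda>n. M * rn (X n)) \<longlongrightarrow> 0) U" using tendsto_mult[OF tendsto_const X(3), of M] by simp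
      qed simp
      moreover have "X \<otimes>\<^bsub>L\<^esub> Y \<in> carrier L" using X Y by simp
      ultimately show ?thesis unfolding Kset_def e by (auto simp: L_simps(2))
    qed
  qed
qed



lemma U_seq: assumes "nonprincipal U" shows "U \<le> sequentially"
  unfolding le_sequentially
proof
  fix N show "eventually (\<lambda>n. N \<le> n) U"
  proof (induction N)
    case (Suc N)
    have "eventually (\<lambda>n. n \<noteq> N) U" using assms by (simp add: nonprincipal_def)
    with Suc show ?case by eventually_elim auto
  qed simp
qed

definition X0 :: "nat \<Rightarrow> l1elt set" where "X0 n = hJ (xs (Suc n))"

lemma X0_L: "X0 \<in> carrier L"
proof -
  have "X0 n \<in> carrier AJ" for n by (simp add: X0_def AJ_carrier xs_l1)
  moreover have "qnorm (X0 n) \<le> 1" for n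
    using qnorm_le[OF xs_l1, of "Suc n"] xs_l1norm[of "Suc n"] by (simp add: X0_def)
  ultimately show ?thesis by (auto simp: L_simps)
qed

lemma X0_rn: assumes "nonprincipal U" shows "((\<lambda>n. rn (X0 n)) \<longlongrightarrow> 0) U"
proof (rule tendsto_sandwich[where f="\<lambda>_. 0" and h="\<lambda>n. inverse (real (Suc n))"])
  show "\<forall>\<^sub>F n in U. 0 \<le> rn (X0 n)"
    by (intro always_eventually allI) (simp add: X0_def rn_hJ xs_l1 rnorm_nonneg)
  show "\<forall>\<^sub>F n in U. rn (X0 n) \<le> inverse (real (Suc n))"
    by (intro always_eventually allI)
       (metis X0_def rn_hJ xs_l1 row_xs le_add1 plus_1_eq_Suc inverse_eq_divide)
  show "((\<lambda>n. inverse (real (Suc n))) \<longlongrightarrow> 0) U"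
    by (rule tendsto_mono[OF U_seq[OF assms] LIMSEQ_inverse_real_of_nat])
qed simp

lemma rnorm_one: "1 \<le> rnorm (delta cu_e)"
proof -
  have "rowsum (delta cu_e) 0 {0} = 1"
    by (simp add: rowsum_def Mx_delta e_in cphi_e)
  then show ?thesis using rowsum_le_rnorm[OF delta_l1[OF e_in], of "{0}" 0] by simp
qed

theorem main:
  fixes U :: "nat filter"
  assumes uf: "nat_ultrafilter U" and np: "nonprincipal U"
  shows "\<not> simple_ring (ultrapower AJ qnorm U) \<and> \<not> purely_infinite (ultrapower AJ qnorm U)"
proof -
  interpret UR: ring "UP U" by (rule UP_ring)
  interpret KI: ideal "Kset U" "UP U" by (rule K_ideal)
  interpret R: ring AJ by (rule AJ_ring)
  interpret LR: ring L by (rule L_ring)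
  have Ubot: "\<not> trivial_limit U" using uf by (simp add: nat_ultrafilter_def)
  define Z where "Z = HU U X0"
  have ZK: "Z \<in> Kset U" unfolding Kset_def Z_def using X0_L X0_rn[OF np] by blast
  have ZC: "Z \<in> carrier (UP U)" unfolding Z_def UP_carrier using X0_L by blast
  have Z0: "Z \<noteq> \<zero>\<^bsub>UP U\<^esub>"
  proof
    assume "Z = \<zero>\<^bsub>UP U\<^esub>"
    then have "X0 \<in> cU AJ qnorm U" using HU_self[OF X0_L, of U] by (simp add: Z_def UP_zero)
    then have lim: "((\<lambda>n. qnorm (X0 n)) \<longlongrightarrow> 0) U" by (simp add: cU_simp)
    have "\<forall>\<^sub>F n in U. 1 \<le> qnorm (X0 n)"
      by (intro always_eventually allI) (simp add: X0_def col_xs)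
    then have "(1::real) \<le> 0" using tendsto_lowerbound[OF lim _ Ubot] by blast
    then show False by simp
  qed
  have oneK: "\<one>\<^bsub>UP U\<^esub> \<notin> Kset U"
  proof
    assume "\<one>\<^bsub>UP U\<^esub> \<in> Kset U"
    then obtain Y where Y: "HU U \<one>\<^bsub>L\<^esub> = HU U Y" "Y \<in> carrier L" "((\<lambda>n. rn (Y n)) \<longlongrightarrow> 0) U"
      unfolding Kset_def UP_one by blast
    have "\<one>\<^bsub>L\<^esub> \<in> HU U Y" using HU_self[OF LR.one_closed, of U] Y(1) by simp
    then obtain c where c: "c \<in> cU AJ qnorm U" "\<one>\<^bsub>L\<^esub> = c \<oplus>\<^bsub>L\<^esub> Y"
      unfolding a_r_coset_def' by blast
    have cL: "c \<in> carrier L" and lc: "((\<lambda>n. qnorm (c n)) \<longlongrightarrow> 0) U" using c(1) by (auto simp: cU_simp)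
    have bnd: "1 \<le> qnorm (c n) + rn (Y n)" for n
    proof -
      have e: "\<one>\<^bsub>AJ\<^esub> = c n \<oplus>\<^bsub>AJ\<^esub> Y n" using fun_cong[OF c(2), of n] by (simp add: L_simps)
      have cn: "c n \<in> carrier AJ" "Y n \<in> carrier AJ" using cL Y(2) L_mem by auto
      have "1 \<le> rn \<one>\<^bsub>AJ\<^esub>" using rnorm_one by (simp add: AJ_one rn_hJ delta_l1 e_in)
      also have "\<dots> \<le> rn (c n) + rn (Y n)" unfolding e by (rule rC_add[OF cn])
      also have "\<dots> \<le> qnorm (c n) + rn (Y n)" using rC_q[OF cn(1)] by simp
      finally show ?thesis .
    qed
    have lim: "((\<lambda>n. qnorm (c n) + rn (Y n)) \<longlongrightarrow> 0) U" using tendsto_add[OF lc Y(3)] by simp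
    have ev: "\<forall>\<^sub>F n in U. 1 \<le> qnorm (c n) + rn (Y n)" using bnd by (intro always_eventually allI)
    have "(1::real) \<le> 0" by (rule tendsto_lowerbound[OF lim ev Ubot])
    then show False by simp
  qed
  have ns: "\<not> simple_ring (UP U)"
  proof
    assume "simple_ring (UP U)"
    then have "Kset U = {\<zero>\<^bsub>UP U\<^esub>} \<or> Kset U = carrier (UP U)"
      unfolding simple_ring_def using K_ideal by blast
    then show False using ZK Z0 oneK UR.one_closed by blast
  qed
  have npi: "\<not> purely_infinite (UP U)"
  proof
    assume "purely_infinite (UP U)"
    then obtain b c where bc: "b \<in> carrier (UP U)" "c \<in> carrier (UP U)"
      "b \<otimes>\<^bsub>UP U\<^esub> Z \<otimes>\<^bsub>UP U\<^esub> c = \<one>\<^bsub>UP U\<^esub>"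
      unfolding purely_infinite_def using ZC Z0 by blast
    have "b \<otimes>\<^bsub>UP U\<^esub> Z \<in> Kset U" using KI.I_l_closed[OF ZK bc(1)] .
    then have "b \<otimes>\<^bsub>UP U\<^esub> Z \<otimes>\<^bsub>UP U\<^esub> c \<in> Kset U" using KI.I_r_closed bc(2) by blast
    then show False using bc(3) oneK by simp
  qed
  show ?thesis using ns npi by simp
qed


theorem theorem3p22:
  fixes U :: "nat filter"
  assumes "nat_ultrafilter U" and "nonprincipal U"
  shows "\<not> simple_ring (ultrapower AJ qnorm U) \<and> \<not> purely_infinite (ultrapower AJ qnorm U)"
  using main[OF assms] .

end
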